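(* There exist constants $C_0, C_1, C_2 > 0$ such that the following holds. Let $\Delta > 0$, $t \in \mathbb{R}$, $L \ge 0$, and let $N \ge 1$ and $K \ge 0$ be integers. Let $\mu^t$ be the probability measure on $\mathbb{R}$ with density $\omega^t(s) = \frac{1}{\Delta}\mathbb{I}_{[t-\Delta,t]}(s)$ (the shifted rectangular weighting function of width $\Delta$, whose orthogonal polynomials are the shifted Legendre polynomials on $[t-\Delta,t]$). Let $t-\Delta < t_1 < \dots < t_K < t$ be the observation times lying in the window $[t-\Delta,t]$, with observed values $x_1,\dots,x_K \in \mathbb{R}$. Let $\hat{x} : [t-\Delta,t] \to \mathbb{R}$ be the forward process, which is $L$-Lipschitz on each of the intervals $[t-\Delta,t_1), [t_1,t_2), \dots, [t_K,t]$, and which at each update time $t_i$ is reset to the observation, i.e. $\hat{x}(t_i) = x_i$, with left limit $\hat{x}(t_i^-)$ existing. Let $S_K = \sum_{i=1}^K \lvert \hat{x}(t_i^-) - x_i \rvert$ be the sum of absolute errors between the forward process and the observations incurred at the update steps. Let $\hat{x}_{<t}$ be the reverse reconstruction, i.e. the orthogonal projection of $\hat{x}$ in $L^2(\mu^t)$ onto the space of polynomials of degree at most $N$: $\hat{x}_{<t} = \sum_{n=0}^N c_n(t) P_n^t / \alpha_n^t$, where $P_n^t$ are the orthogonal polynomials for $\mu^t$, $\alpha_n^t = \langle P_n^t, P_n^t\rangle_{\mu^t}$ and $c_n(t) = \int \hat{x}(s) P_n^t(s)\, d\mu^t(s)$. Then $$\lVert \hat{x} - \hat{x}_{<t} \rVert_{\mu^t}^2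 \le C_0 \frac{\Delta^2 L^2 (K+1)^2}{N(2N-1)} + C_1 \Delta L (K+1) S_K\, \xi\!\left(\tfrac{3}{2}, N\right) + C_2 S_K^2\, \xi\!\left(\tfrac{3}{2}, N\right),$$ where $\lVert g \rVert_{\mu^t}^2 = \int g(s)^2 \, d\mu^t(s)$ and $\xi(s,a) = \sum_{n=0}^\infty (n+a)^{-s}$ is the Hurwitz zeta function.
   Context: This concerns PolyODE, a neural ODE model for irregularly sampled time series. The model maintains a forward prediction $\hat{x}(t)$ of the time series, which between observations evolves continuously according to a learned ODE, and which at each observation time $t_i$ is reset to the observed value $x_i$ (the update step). Simultaneously, it maintains coefficients $c_n(t)$ of the orthogonal projection of the forward process $\hat{x}$ restricted to the window $[t-\Delta,t]$ onto polynomials of degree at most $N$, with respect to the time-varying measure $\mu^t$ with density $\frac{1}{\Delta}\mathbb{I}_{[t-\Delta,t]}$; the reverse reconstruction $\hat{x}_{<t}$ is the polynomial built from these coefficients. $L$ is the Lipschitz constant of the forward process between observations, $K$ the number of observations in $[t-\Delta,t]$, and $S_K$ the sum of the absolute jump sizes of the forward process at the update steps. The constants $C_0, C_1, C_2$ do not depend on $\Delta, L, K, N, t$, the observations or the forward process. *)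

theory Defs
  imports "HOL-Analysis.Analysis" "HOL-Computational_Algebra.Polynomial"
begin

definition mu_int :: "real \<Rightarrow> real \<Rightarrow> (real \<Rightarrow> real) \<Rightarrow> real" where
  "mu_int \<Delta> t f = integral {t - \<Delta>..t} f / \<Delta>"

definition mu_norm2 :: "real \<Rightarrow> real \<Rightarrow> (real \<Rightarrow> real) \<Rightarrow> real" where
  "mu_norm2 \<Delta> t g = mu_int \<Delta> t (\<lambda>s. (g s)\<^sup>2)"

definition is_poly_proj :: "real \<Rightarrow> real \<Rightarrow> nat \<Rightarrow> (real \<Rightarrow> real) \<Rightarrow> real poly \<Rightarrow> bool" where
  "is_poly_proj \<Delta> t N f p \<longleftrightarrow> degree p \<le> N \<and>
     (\<forall>q::real poly. degree q \<le> N \<longrightarrow> mu_int \<Delta> t (\<lambda>s. (f s - poly p s) * poly q s) = 0)"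

definition hurwitz_xi :: "real \<Rightarrow> real \<Rightarrow> real" where
  "hurwitz_xi s a = (\<Sum>n. (real n + a) powr (- s))"

end

theory Submission
  imports Defs
begin

definition lw :: "real poly" where "lw = [:1,0,-1:]"
definition SL :: "real poly \<Rightarrow> real poly" where "SL p = pderiv (lw * pderiv p)"

lemma lw_eq: "lw * q = q - monom 1 2 * q"
  by (simp add: lw_def monom_altdef power2_eq_square algebra_simps)

lemma coeff_SL: "coeff (SL p) k = real ((k+2)*(k+1)) * coeff p (k+2) - real (k*(k+1)) * coeff p k"
proof -
  have "coeff (SL p) k = real (Suc k) * coeff (lw * pderiv p) (Suc k)"
    by (simp add: SL_def coeff_pderiv)
  also have "coeff (lw * pderiv p) (Suc k) = real (k+2) * coeff p (k+2) - (if k = 0 then 0 else real k * coeff p k)"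
    by (cases k) (auto simp: lw_eq coeff_monom_mult coeff_pderiv)
  finally show ?thesis by (cases k) (auto simp: algebra_simps)
qed

fun lb :: "nat \<Rightarrow> nat \<Rightarrow> real" where
  "lb n 0 = 1"
| "lb n (Suc 0) = 0"
| "lb n (Suc (Suc j)) = real ((n-j)*(n-j-1)) * lb n j / (real ((n-j-2)*(n-j-1)) - real (n*(n+1)))"

definition leg :: "nat \<Rightarrow> real poly" where
  "leg n = (\<Sum>k\<le>n. monom (lb n (n-k)) k)"

lemma coeff_leg: "coeff (leg n) k = (if k \<le> n then lb n (n-k) else 0)"
  by (simp add: leg_def coeff_sum coeff_monom)

definition lam :: "nat \<Rightarrow> real" where "lam n = real n * (real n + 1)"

lemma SL_leg: "SL (leg n) = smult (- lam n) (leg n)"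
proof (rule poly_eqI)
  fix k
  show "coeff (SL (leg n)) k = coeff (smult (- lam n) (leg n)) k"
  proof (cases "n < k")
    case True then show ?thesis by (simp add: coeff_SL coeff_leg)
  next
    case False
    then consider "k = n" | "Suc k = n" | "k + 2 \<le> n" by linarith
    then show ?thesis
    proof cases
      case 1 then show ?thesis by (simp add: coeff_SL coeff_leg lam_def algebra_simps)
    next
      case 2 then have "n - k = Suc 0" by simp
      with 2 show ?thesis by (simp add: coeff_SL coeff_leg lam_def)
    next
      case 3
      define j where "j = n - k - 2"
      have nk: "n - k = Suc (Suc j)" "n - (k+2) = j" using 3 by (auto simp: j_def)
      have nj: "n - j = k + 2" "n - j - 1 = k + 1" "n - j - 2 = k" using 3 by (auto simp: j_def)
      have D: "real (k*(k+1)) - real (n*(n+1)) \<noteq> 0"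
      proof -
        have "k*(k+1) < n*(n+1)" using 3 by (intro mult_strict_mono) auto
        then show ?thesis by linarith
      qed
      have "coeff (leg n) k = real ((k+2)*(k+1)) * lb n j / (real (k*(k+1)) - real (n*(n+1)))"
        using 3 by (simp add: coeff_leg nk nj mult.commute)
      moreover have "coeff (leg n) (k+2) = lb n j" using 3 by (simp add: coeff_leg j_def)
      ultimately show ?thesis using D
        by (simp add: coeff_SL lam_def field_simps)
    qed
  qed
qed

lemma lb_0 [simp]: "lb n 0 = 1" by simp

lemma degree_leg: "degree (leg n) = n"
proof (rule antisym)
  show "degree (leg n) \<le> n" by (rule degree_le) (simp add: coeff_leg)
  show "n \<le> degree (leg n)" by (rule le_degree) (simp add: coeff_leg)
qed

lemma leg_nz: "leg n \<noteq> 0"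
  using coeff_leg[of n n] by auto

definition J :: "real poly \<Rightarrow> real" where "J r = integral {-1..1} (poly r)"

lemma poly_integrable [simp]: "(poly (r::real poly)) integrable_on {a..b}"
  using continuous_on_poly[OF continuous_on_id, of "{a..b}" r] by (simp add: integrable_continuous_real)

lemma continuous_on_poly' [simp]: "continuous_on S (poly (r::real poly))"
  using continuous_on_poly[OF continuous_on_id, of S r] by simp

lemma J_add: "J (p + q) = J p + J q"
proof -
  have "poly (p+q) = (\<lambda>x. poly p x + poly q x)" by (rule ext) simp
  then show ?thesis by (simp add: J_def integral_add)
qed
lemma J_diff: "J (p - q) = J p - J q"
proof -
  have "poly (p-q) = (\<lambda>x. poly p x - poly q x)" by (rule ext) simp
  then show ?thesis by (simp add: J_def integral_diff)
qed
lemma J_smult: "J (smult c p) = c * J p"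
proof -
  have "poly (smult c p) = (\<lambda>x. c * poly p x)" by (rule ext) simp
  then show ?thesis by (simp add: J_def)
qed
lemma J_minus: "J (- p) = - J p"
  using J_smult[of "-1" p] by simp
lemma J_sum: "J (\<Sum>i\<in>A. f i) = (\<Sum>i\<in>A. J (f i))"
proof -
  have J0: "J 0 = 0" using J_smult[of 0 0] by simp
  show ?thesis by (induction A rule: infinite_finite_induct) (auto simp: J_add J0)
qed

lemma J_pderiv: "J (pderiv r) = poly r 1 - poly r (-1)"
proof -
  have "((poly (pderiv r)) has_integral (poly r 1 - poly r (-1))) {-1..1}"
    by (intro fundamental_theorem_of_calculus)
       (auto simp: has_real_derivative_iff_has_vector_derivative[symmetric] intro: DERIV_subset[OF poly_DERIV])
  then show ?thesis by (simp add: J_def integral_unique)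
qed

lemma poly_lw: "poly lw 1 = 0" "poly lw (-1) = 0"
  by (simp_all add: lw_def)

lemma green: "J (SL p * q) + J (lw * pderiv p * pderiv q) = 0"
proof -
  have "pderiv (lw * pderiv p * q) = SL p * q + lw * pderiv p * pderiv q"
    by (simp add: SL_def pderiv_mult algebra_simps)
  then have "J (SL p * q) + J (lw * pderiv p * pderiv q) = J (pderiv (lw * pderiv p * q))"
    by (simp add: J_add)
  also have "\<dots> = 0" by (simp add: J_pderiv poly_lw)
  finally show ?thesis .
qed

definition B :: "nat \<Rightarrow> nat \<Rightarrow> real" where
  "B m n = J (lw * pderiv (leg m) * pderiv (leg n))"

lemma B_sym: "B m n = B n m"
  by (simp add: B_def mult_ac)

lemma B_eq: "B m n = lam m * J (leg m * leg n)"
  using green[of "leg m" "leg n"] by (simp add: SL_leg B_def J_smult J_minus)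

lemma lam_inj: "lam m = lam n \<Longrightarrow> m = n"
proof (rule ccontr)
  assume "lam m = lam n" "m \<noteq> n"
  then consider "m < n" | "n < m" by linarith
  then show False
  proof cases
    case 1 then have "real m * (real m + 1) < real n * (real n + 1)"
      by (intro mult_strict_mono) auto
    with \<open>lam m = lam n\<close> show False by (simp add: lam_def)
  next
    case 2 then have "real n * (real n + 1) < real m * (real m + 1)"
      by (intro mult_strict_mono) auto
    with \<open>lam m = lam n\<close> show False by (simp add: lam_def)
  qed
qed

lemma leg_orth: "m \<noteq> n \<Longrightarrow> J (leg m * leg n) = 0"
proof -
  assume mn: "m \<noteq> n"
  have "lam m * J (leg m * leg n) = B m n" by (rule B_eq[symmetric])
  also have "\<dots> = B n m" by (rule B_sym)
  also have "\<dots> = lam n * J (leg n * leg m)" by (rule B_eq)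
  also have "leg n * leg m = leg m * leg n" by (simp add: mult.commute)
  finally have "lam m * J (leg m * leg n) = lam n * J (leg m * leg n)" .
  moreover have "lam m \<noteq> lam n" using lam_inj mn by blast
  ultimately have "(lam m - lam n) * J (leg m * leg n) = 0" by (simp add: algebra_simps)
  with \<open>lam m \<noteq> lam n\<close> show ?thesis by simp
qed

lemma J_sq_pos: assumes "p \<noteq> 0" shows "J (p * p) > 0"
proof -
  have ge: "J (p * p) \<ge> 0" unfolding J_def
    by (intro integral_nonneg) auto
  show ?thesis
  proof (rule ccontr)
    assume "\<not> J (p * p) > 0"
    with ge have z: "J (p * p) = 0" by simp
    have "\<forall>x\<in>{-1..1::real}. poly (p * p) x = 0"
    proof
      fix x :: real assume x: "x \<in> {-1..1}"
      have hi: "(poly (p*p) has_integral 0) (cbox (-1) 1)"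
        using z integrable_integral[OF poly_integrable[of "p*p" "-1" 1]] by (simp add: J_def)
      show "poly (p * p) x = 0"
        using has_integral_0_cbox_imp_0[of "-1" 1 "poly (p*p)" x, OF _ _ hi] x
        by (simp add: continuous_on_mult continuous_on_poly')
    qed
    then have "{-1..1::real} \<subseteq> {x. poly p x = 0}" by auto
    moreover have "finite {x. poly p x = 0}" using assms poly_roots_finite by blast
    ultimately have "finite {-1..1::real}" using finite_subset by blast
    then show False using infinite_Icc[of "-1::real" 1] by simp
  qed
qed

definition al :: "nat \<Rightarrow> real" where "al n = J (leg n * leg n)"

lemma al_pos: "al n > 0"
  by (simp add: al_def J_sq_pos leg_nz)

lemma B_diag: "B m n = (if m = n then lam n * al n else 0)"
  by (simp add: B_eq leg_orth al_def)

lemma J_leg_mult: "J (leg m * leg n) = (if m = n then al n else 0)"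
  by (simp add: leg_orth al_def)

lemma leg_span: "degree Q \<le> M \<Longrightarrow> \<exists>\<beta>. Q = (\<Sum>n\<le>M. smult (\<beta> n) (leg n))"
proof (induction M arbitrary: Q)
  case 0
  then obtain c where "Q = [:c:]" by (metis degree0_coeffs le_zero_eq)
  moreover have "leg 0 = 1" by (simp add: leg_def)
  ultimately show ?case by (intro exI[of _ "\<lambda>_. c"]) simp
next
  case (Suc M)
  define c where "c = coeff Q (Suc M) / lead_coeff (leg (Suc M))"
  define R where "R = Q - smult c (leg (Suc M))"
  have lc: "lead_coeff (leg (Suc M)) \<noteq> 0" using leg_nz by simp
  have "degree R \<le> M"
  proof (rule degree_le, intro allI impI)
    fix i assume "M < i"
    then consider "i = Suc M" | "Suc M < i" by linarith
    then show "coeff R i = 0"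
    proof cases
      case 1 then show ?thesis using lc by (simp add: R_def c_def degree_leg)
    next
      case 2 then show ?thesis using Suc.prems
        by (simp add: R_def coeff_eq_0 degree_leg)
    qed
  qed
  then obtain \<beta> where "R = (\<Sum>n\<le>M. smult (\<beta> n) (leg n))" using Suc.IH by blast
  then have "Q = (\<Sum>n\<le>Suc M. smult ((\<beta>(Suc M := c)) n) (leg n))"
    by (simp add: R_def)
  then show ?case by blast
qed

lemma FL:
  fixes g :: "real \<Rightarrow> real" and \<psi> :: "real poly"
  assumes lip: "lipschitz_on L {-1..1} g" and z1: "poly \<psi> 1 = 0" and z2: "poly \<psi> (-1) = 0"
  shows "\<bar>integral {-1..1} (\<lambda>x. g x * poly (pderiv \<psi>) x)\<bar> \<le> L * integral {-1..1} (\<lambda>x. \<bar>poly \<psi> x\<bar>)"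
proof -
  have L0: "L \<ge> 0" using lipschitz_on_nonneg[OF lip] .
  define c where "c x = max (-1) (min 1 x)" for x :: real
  define G where "G x = g (c x)" for x
  have c_in: "c x \<in> {-1..1}" for x by (auto simp: c_def)
  have c_id: "x \<in> {-1..1} \<Longrightarrow> c x = x" for x by (auto simp: c_def)
  have c_lip: "\<bar>c x - c y\<bar> \<le> \<bar>x - y\<bar>" for x y by (auto simp: c_def)
  have G_lip: "\<bar>G x - G y\<bar> \<le> L * \<bar>x - y\<bar>" for x y
  proof -
    have "\<bar>G x - G y\<bar> \<le> L * \<bar>c x - c y\<bar>"
      using lipschitz_onD[OF lip c_in c_in, of x y] by (simp add: G_def dist_real_def)
    also have "\<dots> \<le> L * \<bar>x - y\<bar>" using c_lip L0 by (intro mult_left_mono) auto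
    finally show ?thesis .
  qed
  have G_cont: "continuous_on UNIV G"
    by (rule lipschitz_on_continuous_on[of L]) (auto intro!: lipschitz_onI simp: dist_real_def G_lip L0)
  have g_cont: "continuous_on {-1..1} g" using lipschitz_on_continuous_on[OF lip] .
  have G_int: "G integrable_on {a..b}" for a b
    by (rule integrable_continuous_real) (rule continuous_on_subset[OF G_cont], simp)
  define \<Phi> where "\<Phi> u = integral {-3..u} G" for u
  have \<Phi>_deriv: "(\<Phi> has_field_derivative G u) (at u)" if "u \<in> {-2..2}" for u
  proof -
    have "(\<Phi> has_vector_derivative G u) (at u within {-3..3})"
      unfolding \<Phi>_def using that
      by (intro integral_has_vector_derivative continuous_on_subset[OF G_cont]) auto
    moreover have "at u within {-3..3} = at u" using that by (intro at_within_Icc_at) auto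
    ultimately show ?thesis by (simp add: has_real_derivative_iff_has_vector_derivative)
  qed
  define P where "P = integral {-1..1} (\<lambda>x. \<bar>poly \<psi> x\<bar>)"
  define A where "A = integral {-1..1} (\<lambda>x. \<bar>poly (pderiv \<psi>) x\<bar>)"
  define I where "I = integral {-1..1} (\<lambda>x. g x * poly (pderiv \<psi>) x)"
  have absint: "(\<lambda>x. \<bar>poly r x\<bar>) integrable_on {-1..1}" for r :: "real poly"
    by (rule integrable_continuous_real) (intro continuous_intros)
  have A0: "A \<ge> 0" unfolding A_def by (intro integral_nonneg absint) auto
  have key: "\<bar>I\<bar> \<le> L * P + h * (L * A)" if h0: "0 < h" and h1: "h \<le> 1" for h
  proof -
    define gh where "gh x = (\<Phi> (x+h) - \<Phi> x) / h" for x
    define dh where "dh x = (G (x+h) - G x) / h" for x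
    have gh_deriv: "(gh has_field_derivative dh x) (at x)" if "x \<in> {-1..1}" for x
    proof -
      have "(\<Phi> has_field_derivative G (x+h)) (at (x+h))"
        using that h0 h1 by (intro \<Phi>_deriv) auto
      then have d1: "((\<lambda>x. \<Phi> (x+h)) has_field_derivative G (x+h)) (at x)"
        by (simp add: DERIV_shift)
      have d2: "(\<Phi> has_field_derivative G x) (at x)" using that by (intro \<Phi>_deriv) auto
      show ?thesis unfolding gh_def dh_def
        by (intro DERIV_cdivide DERIV_diff d1 d2)
    qed
    have G_eq: "x \<in> {-1..1} \<Longrightarrow> G x = g x" for x by (simp add: G_def c_id)
    have gh_close: "\<bar>gh x - g x\<bar> \<le> L * h" if x: "x \<in> {-1..1}" for x
    proof -
      have "integral {-3..x} G + integral {x..x+h} G = integral {-3..x+h} G"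
        using x h0 by (intro Henstock_Kurzweil_Integration.integral_combine G_int) auto
      then have e1: "\<Phi> (x+h) - \<Phi> x = integral {x..x+h} G" by (simp add: \<Phi>_def)
      have "integral {x..x+h} (\<lambda>s. G s - G x) = integral {x..x+h} G - h * G x"
      proof -
        have "integral {x..x+h} (\<lambda>s. G s - G x) = integral {x..x+h} G - integral {x..x+h} (\<lambda>s. G x)"
          by (rule integral_diff) (auto simp: G_int)
        then show ?thesis using h0 by simp
      qed
      then have e2: "gh x - g x = integral {x..x+h} (\<lambda>s. G s - G x) / h"
      proof -
        have "gh x - g x = integral {x..x+h} G / h - G x" unfolding gh_def e1 using x G_eq by simp
        also have "\<dots> = (integral {x..x+h} G - h * G x) / h" using h0 by (simp add: field_simps)
        finally show ?thesis using \<open>integral {x..x+h} (\<lambda>s. G s - G x) = integral {x..x+h} G - h * G x\<close> by simp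
      qed
      have hi: "((\<lambda>s. G s - G x) has_integral integral {x..x+h} (\<lambda>s. G s - G x)) (cbox x (x+h))"
        using integrable_integral[OF integrable_diff[OF G_int integrable_const_ivl[of "G x" x "x+h"]]] by simp
      have bnd: "norm (G s - G x) \<le> L * h" if "s \<in> cbox x (x+h)" for s
      proof -
        from that have "\<bar>s - x\<bar> \<le> h" by auto
        then show ?thesis
          using G_lip[of s x] L0 by (simp, meson mult_left_mono order_trans)
      qed
      have "\<bar>integral {x..x+h} (\<lambda>s. G s - G x)\<bar> \<le> L * h * h"
        using has_integral_bound[OF _ hi bnd] L0 h0 by simp
      then show ?thesis using h0 by (simp add: e2 field_simps abs_divide)
    qed
    have dh_bound: "\<bar>dh x\<bar> \<le> L" for x
      using G_lip[of "x+h" x] h0 by (simp add: dh_def divide_le_eq abs_divide)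
    have dh_cont: "continuous_on {-1..1} dh"
    proof -
      have "continuous_on {-1..1} (\<lambda>x. G (x+h))"
        by (rule continuous_on_compose2[OF G_cont]) (auto intro: continuous_intros)
      moreover have "continuous_on {-1..1} G" by (rule continuous_on_subset[OF G_cont]) simp
      ultimately show ?thesis unfolding dh_def using h0 by (intro continuous_intros) auto
    qed
    have gh_cont: "continuous_on {-1..1} gh"
      by (rule DERIV_continuous_on[where D=dh], rule has_field_derivative_at_within, rule gh_deriv) auto
    have ftc: "((\<lambda>x. dh x * poly \<psi> x + gh x * poly (pderiv \<psi>) x) has_integral
               (gh 1 * poly \<psi> 1 - gh (-1) * poly \<psi> (-1))) {-1..1}"
    proof (rule fundamental_theorem_of_calculus)
      fix x :: real assume x: "x \<in> {-1..1}"
      have "((\<lambda>x. gh x * poly \<psi> x) has_field_derivative dh x * poly \<psi> x + gh x * poly (pderiv \<psi>) x) (at x)"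
        using DERIV_mult[OF gh_deriv[OF x] poly_DERIV[of \<psi> x]] by (simp add: mult.commute)
      then show "((\<lambda>x. gh x * poly \<psi> x) has_vector_derivative dh x * poly \<psi> x + gh x * poly (pderiv \<psi>) x) (at x within {-1..1})"
        by (simp add: has_real_derivative_iff_has_vector_derivative[symmetric] has_field_derivative_at_within)
    qed simp
    have int1: "(\<lambda>x. dh x * poly \<psi> x) integrable_on {-1..1}"
      by (rule integrable_continuous_real) (intro continuous_intros dh_cont)
    have int2: "(\<lambda>x. gh x * poly (pderiv \<psi>) x) integrable_on {-1..1}"
      by (rule integrable_continuous_real) (intro continuous_intros gh_cont)
    have int3: "(\<lambda>x. g x * poly (pderiv \<psi>) x) integrable_on {-1..1}"
      by (rule integrable_continuous_real) (intro continuous_intros g_cont)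
    have sum0: "integral {-1..1} (\<lambda>x. dh x * poly \<psi> x) + integral {-1..1} (\<lambda>x. gh x * poly (pderiv \<psi>) x) = 0"
      using integral_unique[OF ftc] z1 z2 by (simp add: integral_add int1 int2)
    have absL: "(\<lambda>x. L * \<bar>poly \<psi> x\<bar>) integrable_on {-1..1}" using integrable_on_cmult_left[OF absint[of \<psi>], of L] by simp
    have b1: "\<bar>integral {-1..1} (\<lambda>x. dh x * poly \<psi> x)\<bar> \<le> integral {-1..1} (\<lambda>x. L * \<bar>poly \<psi> x\<bar>)"
      using Henstock_Kurzweil_Integration.integral_norm_bound_integral[OF int1, of "\<lambda>x. L * \<bar>poly \<psi> x\<bar>"]
        dh_bound L0 absL
      by (simp add: abs_mult mult_right_mono)
    have intgd: "(\<lambda>x. (g x - gh x) * poly (pderiv \<psi>) x) integrable_on {-1..1}"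
      by (rule integrable_continuous_real) (intro continuous_intros g_cont gh_cont)
    have absLh: "(\<lambda>x. (L*h) * \<bar>poly (pderiv \<psi>) x\<bar>) integrable_on {-1..1}"
      using integrable_on_cmult_left[OF absint[of "pderiv \<psi>"], of "L*h"] by simp
    have pw: "norm ((g x - gh x) * poly (pderiv \<psi>) x) \<le> (L*h) * \<bar>poly (pderiv \<psi>) x\<bar>" if "x \<in> {-1..1}" for x
    proof -
      have "\<bar>g x - gh x\<bar> \<le> L * h" using gh_close[OF that] by (simp add: abs_minus_commute)
      then show ?thesis by (simp add: abs_mult mult_right_mono)
    qed
    have b2: "\<bar>integral {-1..1} (\<lambda>x. (g x - gh x) * poly (pderiv \<psi>) x)\<bar> \<le> integral {-1..1} (\<lambda>x. (L*h) * \<bar>poly (pderiv \<psi>) x\<bar>)"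
      using Henstock_Kurzweil_Integration.integral_norm_bound_integral[OF intgd absLh pw] by simp
    have split: "I = integral {-1..1} (\<lambda>x. gh x * poly (pderiv \<psi>) x) + integral {-1..1} (\<lambda>x. (g x - gh x) * poly (pderiv \<psi>) x)"
    proof -
      have "integral {-1..1} (\<lambda>x. gh x * poly (pderiv \<psi>) x + (g x - gh x) * poly (pderiv \<psi>) x) = 
            integral {-1..1} (\<lambda>x. gh x * poly (pderiv \<psi>) x) + integral {-1..1} (\<lambda>x. (g x - gh x) * poly (pderiv \<psi>) x)"
        by (intro integral_add int2) (rule integrable_continuous_real, intro continuous_intros g_cont gh_cont)
      then show ?thesis by (simp add: I_def algebra_simps)
    qed
    have "\<bar>I\<bar> \<le> \<bar>integral {-1..1} (\<lambda>x. dh x * poly \<psi> x)\<bar> + \<bar>integral {-1..1} (\<lambda>x. (g x - gh x) * poly (pderiv \<psi>) x)\<bar>"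
      using split sum0 by linarith
    also have "\<dots> \<le> integral {-1..1} (\<lambda>x. L * \<bar>poly \<psi> x\<bar>) + integral {-1..1} (\<lambda>x. (L*h) * \<bar>poly (pderiv \<psi>) x\<bar>)"
      using b1 b2 by linarith
    also have "\<dots> = L * P + h * (L * A)" by (simp add: P_def A_def)
    finally show ?thesis .
  qed
  have "\<bar>I\<bar> \<le> L * P"
  proof (rule field_le_epsilon)
    fix e :: real assume e: "0 < e"
    define h where "h = min 1 (e / (L * A + 1))"
    have h0: "0 < h" using e L0 A0 by (simp add: h_def add_nonneg_pos)
    have "h * (L * A) \<le> (e / (L * A + 1)) * (L * A)"
      using L0 A0 by (intro mult_right_mono) (auto simp: h_def)
    also have "\<dots> = e * ((L * A) / (L * A + 1))" by simp
    also have "\<dots> \<le> e * 1" using L0 A0 e by (intro mult_left_mono) (auto simp: divide_le_eq_1 add_nonneg_pos)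
    finally have "h * (L * A) \<le> e" by simp
    moreover have "h \<le> 1" by (simp add: h_def)
    ultimately show "\<bar>I\<bar> \<le> L * P + e" using key[OF h0] by linarith
  qed
  then show ?thesis by (simp add: I_def P_def)
qed

lemma pderiv_sum': "pderiv (\<Sum>i\<in>A. f i) = (\<Sum>i\<in>A. pderiv (f i))"
  by (induction A rule: infinite_finite_induct) (simp_all add: pderiv_add)

lemma integrable_cmult_real: "f integrable_on S \<Longrightarrow> (\<lambda>x. (c::real) * f x) integrable_on S"
  using integrable_on_cmult_left[of f S c] by simp

definition cf :: "(real \<Rightarrow> real) \<Rightarrow> nat \<Rightarrow> real" where
  "cf g n = integral {-1..1} (\<lambda>x. g x * poly (leg n) x)"

definition Sp :: "(nat \<Rightarrow> real) \<Rightarrow> nat \<Rightarrow> real poly" where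
  "Sp \<beta> M = (\<Sum>n\<le>M. smult (\<beta> n) (leg n))"

lemma J_double:
  "J ((\<Sum>m\<le>M. smult (a m) (p m)) * (\<Sum>n\<le>M. smult (b n) (q n))) =
   (\<Sum>m\<le>M. \<Sum>n\<le>M. a m * b n * J (p m * q n))"
  by (simp add: sum_product J_sum J_smult mult_ac)

lemma J_Sp_sq: "J (Sp \<beta> M * Sp \<beta> M) = (\<Sum>n\<le>M. (\<beta> n)\<^sup>2 * al n)"
proof -
  have "J (Sp \<beta> M * Sp \<beta> M) = (\<Sum>m\<le>M. \<Sum>n\<le>M. \<beta> m * \<beta> n * (if m = n then al n else 0))"
    unfolding Sp_def J_double J_leg_mult ..
  also have "\<dots> = (\<Sum>m\<le>M. \<beta> m * \<beta> m * al m)"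
    by (simp add: if_distrib sum.delta cong: if_cong)
  finally show ?thesis by (simp add: power2_eq_square)
qed

lemma expand:
  assumes gc: "continuous_on {-1..1} g"
  shows "integral {-1..1} (\<lambda>x. (g x - poly (Sp \<beta> M) x)\<^sup>2) =
    integral {-1..1} (\<lambda>x. (g x)\<^sup>2) - 2 * (\<Sum>n\<le>M. \<beta> n * cf g n) + (\<Sum>n\<le>M. (\<beta> n)\<^sup>2 * al n)"
proof -
  let ?S = "Sp \<beta> M"
  have i1: "(\<lambda>x. (g x)\<^sup>2) integrable_on {-1..1}"
    by (rule integrable_continuous_real) (intro continuous_intros gc)
  have i2: "(\<lambda>x. g x * poly ?S x) integrable_on {-1..1}"
    by (rule integrable_continuous_real) (intro continuous_intros gc)
  have i3: "(\<lambda>x. g x * poly (leg n) x) integrable_on {-1..1}" for n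
    by (rule integrable_continuous_real) (intro continuous_intros gc)
  have pw: "(g x - poly ?S x)\<^sup>2 = ((g x)\<^sup>2 - 2 * (g x * poly ?S x)) + poly (?S * ?S) x" for x
    by (simp add: power2_eq_square algebra_simps)
  have i4: "(\<lambda>x. (g x)\<^sup>2 - 2 * (g x * poly ?S x)) integrable_on {-1..1}"
    using integrable_diff[OF i1 integrable_cmult_real[OF i2, of 2]] by simp
  have "integral {-1..1} (\<lambda>x. (g x - poly ?S x)\<^sup>2) =
        integral {-1..1} (\<lambda>x. ((g x)\<^sup>2 - 2 * (g x * poly ?S x)) + poly (?S * ?S) x)"
    by (simp only: pw)
  also have "\<dots> = integral {-1..1} (\<lambda>x. (g x)\<^sup>2 - 2 * (g x * poly ?S x)) + integral {-1..1} (\<lambda>x. poly (?S * ?S) x)"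
    by (rule integral_add[OF i4 poly_integrable])
  also have "integral {-1..1} (\<lambda>x. (g x)\<^sup>2 - 2 * (g x * poly ?S x)) = integral {-1..1} (\<lambda>x. (g x)\<^sup>2) - integral {-1..1} (\<lambda>x. 2 * (g x * poly ?S x))"
    by (rule integral_diff[OF i1 integrable_cmult_real[OF i2, of 2]])
  also have "integral {-1..1} (\<lambda>x. 2 * (g x * poly ?S x)) = 2 * integral {-1..1} (\<lambda>x. g x * poly ?S x)"
    by simp
  also have "integral {-1..1} (\<lambda>x. poly (?S * ?S) x) = J (?S * ?S)" unfolding J_def by (rule refl)
  also have "integral {-1..1} (\<lambda>x. g x * poly ?S x) = (\<Sum>n\<le>M. \<beta> n * cf g n)"
  proof -
    have "(\<lambda>x. g x * poly ?S x) = (\<lambda>x. \<Sum>n\<le>M. \<beta> n * (g x * poly (leg n) x))"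
      by (rule ext) (simp add: Sp_def poly_sum sum_distrib_left mult_ac)
    moreover have "integral {-1..1} (\<lambda>x. \<Sum>n\<le>M. \<beta> n * (g x * poly (leg n) x)) = (\<Sum>n\<le>M. integral {-1..1} (\<lambda>x. \<beta> n * (g x * poly (leg n) x)))"
      by (rule integral_sum) (auto intro: integrable_cmult_real i3)
    ultimately show ?thesis by (simp add: cf_def)
  qed
  finally show ?thesis by (simp add: J_Sp_sq)
qed

lemma poly_lw_nonneg: "x \<in> {-1..1} \<Longrightarrow> poly lw x \<ge> 0"
proof -
  assume "x \<in> {-1..1}"
  then have "x * x \<le> 1" by (auto intro: mult_le_one[of "\<bar>x\<bar>" "\<bar>x\<bar>", simplified])
  then show ?thesis by (simp add: lw_def)
qed

lemma J_lw: "J lw = 4/3"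
proof -
  have "lw = pderiv [:0, 1, 0, -1/3:]" by (simp add: lw_def pderiv_pCons)
  then have "J lw = J (pderiv [:0, 1, 0, -1/3:])" by simp
  also have "\<dots> = 4/3" by (simp add: J_pderiv)
  finally show ?thesis .
qed

lemma T_bound:
  assumes lip: "lipschitz_on L {-1..1} g"
  shows "(\<Sum>n\<le>M. lam n * (cf g n)\<^sup>2 / al n) \<le> 4/3 * L\<^sup>2"
proof -
  have L0: "L \<ge> 0" using lipschitz_on_nonneg[OF lip] .
  have gc: "continuous_on {-1..1} g" using lipschitz_on_continuous_on[OF lip] .
  define a where "a n = cf g n / al n" for n
  define T where "T = (\<Sum>n\<le>M. lam n * (cf g n)\<^sup>2 / al n)"
  define \<phi> where "\<phi> = (\<Sum>n\<le>M. smult (a n) (pderiv (leg n)))"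
  define \<psi> where "\<psi> = lw * \<phi>"
  have z1: "poly \<psi> 1 = 0" and z2: "poly \<psi> (-1) = 0" by (simp_all add: \<psi>_def poly_lw)
  define k where "k n = - a n * lam n" for n
  have dpsi: "pderiv \<psi> = (\<Sum>n\<le>M. smult (k n) (leg n))"
    by (simp add: \<psi>_def \<phi>_def k_def sum_distrib_left pderiv_sum' pderiv_smult SL_leg[unfolded SL_def] mult.commute)
  have i3: "(\<lambda>x. g x * poly (leg n) x) integrable_on {-1..1}" for n
    by (rule integrable_continuous_real) (intro continuous_intros gc)
  have "integral {-1..1} (\<lambda>x. g x * poly (pderiv \<psi>) x) = (\<Sum>n\<le>M. k n * cf g n)"
  proof -
    have "(\<lambda>x. g x * poly (pderiv \<psi>) x) = (\<lambda>x. \<Sum>n\<le>M. k n * (g x * poly (leg n) x))"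
      by (rule ext) (simp add: dpsi poly_sum sum_distrib_left mult_ac)
    moreover have "integral {-1..1} (\<lambda>x. \<Sum>n\<le>M. k n * (g x * poly (leg n) x)) = (\<Sum>n\<le>M. integral {-1..1} (\<lambda>x. k n * (g x * poly (leg n) x)))"
      by (rule integral_sum) (auto intro: integrable_cmult_real i3)
    ultimately show ?thesis by (simp add: cf_def)
  qed
  also have "\<dots> = - T"
    by (simp add: T_def a_def k_def sum_negf[symmetric] power2_eq_square mult_ac)
  finally have IT: "integral {-1..1} (\<lambda>x. g x * poly (pderiv \<psi>) x) = - T" .
  have FLb: "T \<le> L * integral {-1..1} (\<lambda>x. \<bar>poly \<psi> x\<bar>)"
    using FL[OF lip z1 z2] IT by simp
  have Tnn: "T \<ge> 0" unfolding T_def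
    by (intro sum_nonneg) (auto intro!: divide_nonneg_pos al_pos simp: lam_def)
  have JB: "J (lw * \<phi> * \<phi>) = T"
  proof -
    have "J (lw * \<phi> * \<phi>) = J ((\<Sum>m\<le>M. smult (a m) (lw * pderiv (leg m))) * (\<Sum>n\<le>M. smult (a n) (pderiv (leg n))))"
      by (simp add: \<phi>_def sum_distrib_left mult.assoc)
    also have "\<dots> = (\<Sum>m\<le>M. \<Sum>n\<le>M. a m * a n * B m n)"
      unfolding J_double B_def by (simp add: mult.assoc)
    also have "\<dots> = (\<Sum>m\<le>M. a m * a m * (lam m * al m))"
      by (simp add: B_diag if_distrib sum.delta cong: if_cong)
    also have "\<dots> = T"
      unfolding T_def a_def using al_pos
      by (intro sum.cong refl) (simp add: power2_eq_square field_simps)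
    finally show ?thesis .
  qed
  show ?thesis
  proof (cases "L = 0")
    case True then show ?thesis using FLb Tnn by (simp add: T_def)
  next
    case False
    with L0 have Lp: "L > 0" by simp
    have "integral {-1..1} (\<lambda>x. \<bar>poly \<psi> x\<bar>) \<le> integral {-1..1} (poly (smult (1/(2*L)) (lw * \<phi> * \<phi>) + smult (L/2) lw))"
    proof (rule integral_le)
      show "(\<lambda>x. \<bar>poly \<psi> x\<bar>) integrable_on {-1..1}"
        by (rule integrable_continuous_real) (intro continuous_intros)
      show "poly (smult (1/(2*L)) (lw * \<phi> * \<phi>) + smult (L/2) lw) integrable_on {-1..1}" by simp
      fix x :: real assume x: "x \<in> {-1..1}"
      have amgm: "\<bar>y\<bar> \<le> y\<^sup>2 / (2*L) + L/2" for y :: real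
      proof -
        have "0 \<le> (\<bar>y\<bar> - L)\<^sup>2" by simp
        then have "2 * L * \<bar>y\<bar> \<le> y\<^sup>2 + L\<^sup>2" by (simp add: power2_eq_square algebra_simps)
        then show ?thesis using Lp by (simp add: field_simps power2_eq_square)
      qed
      have "\<bar>poly \<psi> x\<bar> = poly lw x * \<bar>poly \<phi> x\<bar>"
        using poly_lw_nonneg[OF x] by (simp add: \<psi>_def abs_mult)
      also have "\<dots> \<le> poly lw x * ((poly \<phi> x)\<^sup>2 / (2*L) + L/2)"
        by (intro mult_left_mono amgm poly_lw_nonneg x)
      also have "\<dots> = poly (smult (1/(2*L)) (lw * \<phi> * \<phi>) + smult (L/2) lw) x"
        by (simp add: power2_eq_square field_simps)
      finally show "\<bar>poly \<psi> x\<bar> \<le> poly (smult (1/(2*L)) (lw * \<phi> * \<phi>) + smult (L/2) lw) x" .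
    qed
    also have "\<dots> = T / (2*L) + L/2 * (4/3)"
      using JB by (simp add: J_def[symmetric] J_add J_smult J_lw)
    finally have "integral {-1..1} (\<lambda>x. \<bar>poly \<psi> x\<bar>) \<le> T / (2*L) + L/2 * (4/3)" .
    then have "T \<le> L * (T / (2*L) + L/2 * (4/3))"
      using FLb Lp by (meson mult_left_mono less_imp_le order_trans)
    also have "\<dots> = T/2 + 2/3 * L\<^sup>2" using Lp by (simp add: field_simps power2_eq_square)
    finally show ?thesis by (simp add: T_def)
  qed
qed

lemma lam_pos: "n \<ge> 1 \<Longrightarrow> lam n > 0"
  by (simp add: lam_def)

lemma lam_mono: "m \<le> n \<Longrightarrow> lam m \<le> lam n"
  by (simp add: lam_def mult_mono)

lemma degree_Sp: "degree (Sp \<beta> M) \<le> M"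
  unfolding Sp_def
  by (rule degree_sum_le) (auto intro: order_trans[OF degree_smult_le] simp: degree_leg)

lemma jackson_std:
  assumes lip: "lipschitz_on L {-1..1} g"
  shows "\<exists>q. degree q \<le> N \<and> integral {-1..1} (\<lambda>x. (g x - poly q x)\<^sup>2) \<le> 4/3 * L\<^sup>2 / lam (Suc N)"
proof -
  have gc: "continuous_on {-1..1} g" using lipschitz_on_continuous_on[OF lip] .
  define a where "a n = cf g n / al n" for n
  define u where "u n = (cf g n)\<^sup>2 / al n" for n
  define G2 where "G2 = integral {-1..1} (\<lambda>x. (g x)\<^sup>2)"
  have u_nn: "u n \<ge> 0" for n using al_pos[of n] by (simp add: u_def)
  have exact: "integral {-1..1} (\<lambda>x. (g x - poly (Sp a M) x)\<^sup>2) = G2 - (\<Sum>n\<le>M. u n)" for M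
  proof -
    have "(\<Sum>n\<le>M. (a n)\<^sup>2 * al n) - 2 * (\<Sum>n\<le>M. a n * cf g n) = - (\<Sum>n\<le>M. u n)"
      unfolding sum_distrib_left sum_subtractf[symmetric] sum_negf[symmetric]
      using al_pos by (intro sum.cong refl) (simp add: a_def u_def power2_eq_square field_simps)
    then show ?thesis by (simp add: expand[OF gc] G2_def)
  qed
  have low: "G2 - (\<Sum>n\<le>M. u n) \<le> integral {-1..1} (\<lambda>x. (g x - poly Q x)\<^sup>2)" if dQM: "degree Q \<le> M" for Q M
  proof -
    obtain \<beta> where Q: "Q = Sp \<beta> M" using leg_span[OF dQM] unfolding Sp_def by blast
    have "- (\<Sum>n\<le>M. u n) \<le> (\<Sum>n\<le>M. (\<beta> n)\<^sup>2 * al n) - 2 * (\<Sum>n\<le>M. \<beta> n * cf g n)"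
      unfolding sum_distrib_left sum_subtractf[symmetric] sum_negf[symmetric]
    proof (rule sum_mono)
      fix n assume "n \<in> {..M}"
      have ap: "al n > 0" by (rule al_pos)
      have "0 \<le> al n * (\<beta> n - cf g n / al n)\<^sup>2" using ap by simp
      also have "\<dots> = (\<beta> n)\<^sup>2 * al n - 2 * (\<beta> n * cf g n) + u n"
        using ap by (simp add: u_def power2_eq_square field_simps)
      finally show "- u n \<le> (\<beta> n)\<^sup>2 * al n - 2 * (\<beta> n * cf g n)" by simp
    qed
    then show ?thesis by (simp add: Q expand[OF gc] G2_def)
  qed
  define T where "T M = (\<Sum>n\<le>M. lam n * (cf g n)\<^sup>2 / al n)" for M
  have tail: "(\<Sum>n\<le>M. u n) \<le> (\<Sum>n\<le>N. u n) + T M / lam (Suc N)" if "N \<le> M" for M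
  proof -
    have lp: "lam (Suc N) > 0" by (rule lam_pos) simp
    have sub: "{..N} \<subseteq> {..M}" using that by auto
    have "(\<Sum>n\<le>M. u n) = (\<Sum>n\<in>{..M} - {..N}. u n) + (\<Sum>n\<le>N. u n)"
      using sum.subset_diff[OF sub] by simp
    also have "(\<Sum>n\<in>{..M} - {..N}. u n) \<le> (\<Sum>n\<in>{..M} - {..N}. lam n * u n / lam (Suc N))"
    proof (rule sum_mono)
      fix n assume "n \<in> {..M} - {..N}"
      then have "Suc N \<le> n" by auto
      then have "lam (Suc N) \<le> lam n" by (rule lam_mono)
      then have "lam (Suc N) * u n \<le> lam n * u n" using u_nn by (intro mult_right_mono) auto
      then show "u n \<le> lam n * u n / lam (Suc N)" using lp by (simp add: field_simps)
    qed
    also have "\<dots> \<le> (\<Sum>n\<le>M. lam n * u n / lam (Suc N))"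
      using lp u_nn by (intro sum_mono2) (auto intro!: divide_nonneg_pos mult_nonneg_nonneg simp: lam_def)
    also have "\<dots> = T M / lam (Suc N)"
      by (simp add: T_def u_def sum_divide_distrib)
    finally show ?thesis by simp
  qed
  have approx: "G2 - (\<Sum>n\<le>M. u n) \<le> 2 * e\<^sup>2" if e: "e > 0" and "N \<le> M" and "degree Q \<le> M"
    and Qe: "\<And>x. x \<in> {-1..1} \<Longrightarrow> \<bar>g x - poly Q x\<bar> < e" for e M Q
  proof -
    have "integral {-1..1} (\<lambda>x. (g x - poly Q x)\<^sup>2) \<le> integral {-1..1} (\<lambda>x::real. e\<^sup>2)"
    proof (rule Henstock_Kurzweil_Integration.integral_le)
      show "(\<lambda>x. (g x - poly Q x)\<^sup>2) integrable_on {-1..1}"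
        by (rule integrable_continuous_real) (intro continuous_intros gc)
      show "(\<lambda>x::real. e\<^sup>2) integrable_on {-1..1}" by (rule integrable_const_ivl)
      fix x :: real assume "x \<in> {-1..1}"
      then have "\<bar>g x - poly Q x\<bar> < e" by (rule Qe)
      then show "(g x - poly Q x)\<^sup>2 \<le> e\<^sup>2"
        by (metis abs_ge_zero abs_le_square_iff less_imp_le power2_abs abs_of_pos e)
    qed
    also have "\<dots> = 2 * e\<^sup>2" by simp
    finally show ?thesis using low[OF \<open>degree Q \<le> M\<close>] by linarith
  qed
  have main: "G2 - (\<Sum>n\<le>N. u n) \<le> 4/3 * L\<^sup>2 / lam (Suc N)"
  proof (rule field_le_epsilon)
    fix e' :: real assume e': "e' > 0"
    define e where "e = sqrt (e'/2)"
    have e0: "e > 0" using e' by (simp add: e_def)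
    have ee: "2 * e\<^sup>2 = e'" using e' by (simp add: e_def)
    obtain p where rp: "real_polynomial_function p" and pe: "\<And>x. x \<in> {-1..1} \<Longrightarrow> \<bar>g x - p x\<bar> < e"
      using Stone_Weierstrass_real_polynomial_function[of "{-1..1::real}" g e] gc e0 by auto
    obtain c n where pc: "p = (\<lambda>x. \<Sum>i\<le>n. c i * x^i)"
      using rp real_polynomial_function_iff_sum by blast
    define Q where "Q = (\<Sum>i\<le>n. monom (c i) i)"
    have pQ: "poly Q x = p x" for x by (simp add: Q_def pc poly_sum poly_monom)
    have dQ: "degree Q \<le> max N n"
      unfolding Q_def by (rule degree_sum_le) (auto simp: degree_monom_le intro: order_trans[OF degree_monom_le])
    have "G2 - (\<Sum>n\<le>max N n. u n) \<le> 2 * e\<^sup>2"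
      by (rule approx[OF e0 _ dQ]) (auto simp: pQ pe)
    moreover have "(\<Sum>n\<le>max N n. u n) \<le> (\<Sum>n\<le>N. u n) + T (max N n) / lam (Suc N)"
      by (rule tail) simp
    moreover have "T (max N n) \<le> 4/3 * L\<^sup>2" unfolding T_def by (rule T_bound[OF lip])
    moreover have "lam (Suc N) > 0" by (rule lam_pos) simp
    ultimately have "G2 - (\<Sum>n\<le>N. u n) \<le> 2 * e\<^sup>2 + 4/3 * L\<^sup>2 / lam (Suc N)"
      by (smt (verit) divide_right_mono)
    then show "G2 - (\<Sum>n\<le>N. u n) \<le> 4/3 * L\<^sup>2 / lam (Suc N) + e'" using ee by simp
  qed
  show ?thesis
    using main exact[of N] degree_Sp[of a N] by auto
qed

lemma jackson_ab:
  fixes g :: "real \<Rightarrow> real"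
  assumes ab: "a < b" and lip: "lipschitz_on L {a..b} g"
  shows "\<exists>q. degree q \<le> N \<and> integral {a..b} (\<lambda>x. (g x - poly q x)\<^sup>2) \<le> L\<^sup>2 * (b-a)^3 / (6 * lam (Suc N))"
proof -
  define m where "m = (b - a) / 2"
  define c where "c = (a + b) / 2"
  have m0: "m > 0" using ab by (simp add: m_def)
  have L0: "L \<ge> 0" using lipschitz_on_nonneg[OF lip] .
  define gt where "gt y = g (m * y + c)" for y
  have map_in: "m * y + c \<in> {a..b}" if "y \<in> {-1..1}" for y
  proof -
    from that have "-1 \<le> y" "y \<le> 1" by auto
    have "m * y \<le> m * 1" using m0 \<open>y \<le> 1\<close> by (intro mult_left_mono) auto
    moreover have "m * (-1) \<le> m * y" using m0 \<open>-1 \<le> y\<close> by (intro mult_left_mono) auto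
    moreover have "a = c - m" "b = c + m" by (simp_all add: m_def c_def field_simps)
    ultimately show ?thesis by auto
  qed
  have lipt: "lipschitz_on (L * m) {-1..1} gt"
  proof (rule lipschitz_onI)
    show "0 \<le> L * m" using L0 m0 by simp
    fix x y :: real assume x: "x \<in> {-1..1}" and y: "y \<in> {-1..1}"
    have "dist (gt x) (gt y) \<le> L * dist (m * x + c) (m * y + c)"
      unfolding gt_def by (rule lipschitz_onD[OF lip map_in[OF x] map_in[OF y]])
    also have "dist (m * x + c) (m * y + c) = m * dist x y"
      using m0 by (simp add: dist_real_def right_diff_distrib[symmetric] abs_mult)
    finally show "dist (gt x) (gt y) \<le> L * m * dist x y" by (simp add: mult.assoc)
  qed
  obtain qt where dq: "degree qt \<le> N" and bq: "integral {-1..1} (\<lambda>x. (gt x - poly qt x)\<^sup>2) \<le> 4/3 * (L*m)\<^sup>2 / lam (Suc N)"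
    using jackson_std[OF lipt] by blast
  define q where "q = pcompose qt [:- c / m, 1 / m:]"
  have pq: "poly q (m * y + c) = poly qt y" for y
    using m0 by (simp add: q_def poly_pcompose field_simps)
  have dq': "degree q \<le> N"
    using degree_pcompose_le[of qt "[:- c / m, 1 / m:]"] dq m0 by (simp add: q_def)
  define f where "f x = (g x - poly q x)\<^sup>2" for x
  have fc: "continuous_on {a..b} f"
    unfolding f_def by (intro continuous_intros lipschitz_on_continuous_on[OF lip])
  have fi: "(f has_integral integral {a..b} f) (cbox a b)"
    using integrable_integral[OF integrable_continuous_real[OF fc]] by simp
  have "((\<lambda>x. f (m *\<^sub>R x + c)) has_integral (integral {a..b} f /\<^sub>R m ^ DIM(real)))
               (cbox ((a - c) /\<^sub>R m) ((b - c) /\<^sub>R m))"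
    by (rule iffD2[OF has_integral_affinity_iff[OF m0] fi])
  moreover have "(a - c) /\<^sub>R m = -1" "(b - c) /\<^sub>R m = 1" using ab by (auto simp: m_def c_def field_simps)
  moreover have "(\<lambda>x. f (m *\<^sub>R x + c)) = (\<lambda>x. (gt x - poly qt x)\<^sup>2)"
    by (rule ext) (simp add: f_def gt_def pq)
  ultimately have "((\<lambda>x. (gt x - poly qt x)\<^sup>2) has_integral (integral {a..b} f / m)) {-1..1}"
    by (simp add: divide_inverse_commute)
  then have "integral {-1..1} (\<lambda>x. (gt x - poly qt x)\<^sup>2) = integral {a..b} f / m"
    by (rule integral_unique)
  with bq have "integral {a..b} f / m \<le> 4/3 * (L*m)\<^sup>2 / lam (Suc N)" by simp
  then have "integral {a..b} f \<le> m * (4/3 * (L*m)\<^sup>2 / lam (Suc N))"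
    using m0 by (simp add: divide_le_eq mult.commute)
  also have "\<dots> = (4/3 * L\<^sup>2 * m^3) / lam (Suc N)"
    by (simp add: power2_eq_square power3_eq_cube)
  also have "m^3 = (b-a)^3 / 8" by (simp add: m_def power_divide)
  also have "4/3 * L\<^sup>2 * ((b-a)^3 / 8) / lam (Suc N) = L\<^sup>2 * (b-a)^3 / (6 * lam (Suc N))"
    by simp
  finally show ?thesis using dq' unfolding f_def by blast
qed

lemma lip_close:
  fixes \<phi> :: "real \<Rightarrow> real"
  assumes lip: "lipschitz_on L {u..<v} \<phi>" and uv: "u < v" and lim: "(\<phi> \<longlongrightarrow> \<phi> v) (at_left v)"
  shows "lipschitz_on L {u..v} \<phi>"
proof (rule lipschitz_onI)
  show L0: "0 \<le> L" using lipschitz_on_nonneg[OF lip] .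
  have key: "dist (\<phi> x) (\<phi> v) \<le> L * dist x v" if x: "x \<in> {u..<v}" for x
  proof -
    have "((\<lambda>s. dist (\<phi> x) (\<phi> s) - L * dist x s) \<longlongrightarrow> dist (\<phi> x) (\<phi> v) - L * dist x v) (at_left v)"
      by (intro tendsto_intros lim) 
    moreover have "eventually (\<lambda>s. dist (\<phi> x) (\<phi> s) - L * dist x s \<le> 0) (at_left v)"
    proof -
      have "eventually (\<lambda>s. s \<in> {x<..<v}) (at_left v)" using x by (intro eventually_at_left_real) auto
      then show ?thesis
        by eventually_elim (use x in \<open>auto intro!: lipschitz_onD[OF lip]\<close>)
    qed
    ultimately have "dist (\<phi> x) (\<phi> v) - L * dist x v \<le> 0"
      by (intro tendsto_upperbound) (auto simp: trivial_limit_at_left_real)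
    then show ?thesis by simp
  qed
  fix x y assume x: "x \<in> {u..v}" and y: "y \<in> {u..v}"
  show "dist (\<phi> x) (\<phi> y) \<le> L * dist x y"
  proof (cases "x = v")
    case True
    show ?thesis
    proof (cases "y = v")
      case True with \<open>x = v\<close> show ?thesis by simp
    next
      case False
      with y have "y \<in> {u..<v}" by auto
      from key[OF this] \<open>x = v\<close> show ?thesis by (simp add: dist_commute)
    qed
  next
    case False
    with x have x': "x \<in> {u..<v}" by auto
    show ?thesis
    proof (cases "y = v")
      case True with key[OF x'] show ?thesis by simp
    next
      case False
      with y have "y \<in> {u..<v}" by auto
      with x' show ?thesis by (rule lipschitz_onD[OF lip])
    qed
  qed
qed

lemma xi_lower:
  assumes N: "N \<ge> 1"
  shows "hurwitz_xi (3/2) (real N) \<ge> 1 / (3 * sqrt (real N))"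
proof -
  define f where "f n = (real n + real N) powr (-(3/2))" for n
  have fnn: "f n \<ge> 0" for n by (simp add: f_def)
  have sum1: "summable (\<lambda>n. real n powr (-(3/2)))" by (simp add: summable_real_powr_iff)
  then have sum2: "summable (\<lambda>n. real (Suc n) powr (-(3/2)))"
    using summable_Suc_iff[of "\<lambda>n. real n powr (-(3/2))"] by simp
  have sf: "summable f"
  proof (rule summable_comparison_test'[OF sum2])
    fix n :: nat assume "n \<ge> 0"
    have "f n \<le> real (Suc n) powr (-(3/2))"
      unfolding f_def using N by (intro powr_mono2') auto
    then show "norm (f n) \<le> real (Suc n) powr (-(3/2))" using fnn[of n] by simp
  qed
  have "(\<Sum>n<N. f n) \<le> suminf f" by (rule sum_le_suminf[OF sf]) (auto simp: fnn)
  moreover have "(\<Sum>n<N. f n) \<ge> (\<Sum>n<N. (2 * real N) powr (-(3/2)))"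
  proof (rule sum_mono)
    fix n assume "n \<in> {..<N}"
    then show "(2 * real N) powr (-(3/2)) \<le> f n"
      unfolding f_def using N by (intro powr_mono2') auto
  qed
  moreover have "(\<Sum>n<N. (2 * real N) powr (-(3/2))) = 1 / (2 * sqrt 2 * sqrt (real N))"
  proof -
    have Np: "real N > 0" using N by simp
    have "(2 * real N) powr (3/2) = (2 * real N) powr 1 * (2 * real N) powr (1/2)"
      using powr_add[of "2 * real N" 1 "1/2"] by simp
    also have "\<dots> = 2 * real N * sqrt (2 * real N)" using Np by (simp add: powr_half_sqrt)
    finally have e: "(2 * real N) powr (3/2) = 2 * real N * (sqrt 2 * sqrt (real N))"
      by (simp add: real_sqrt_mult)
    have "(\<Sum>n<N. (2 * real N) powr (-(3/2))) = real N * (2 * real N) powr (-(3/2))" by simp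
    also have "\<dots> = real N / (2 * real N) powr (3/2)"
      by (simp only: powr_minus divide_inverse)
    also have "\<dots> = real N / (real N * (2 * sqrt 2 * sqrt (real N)))"
      unfolding e by (simp only: mult_ac)
    also have "\<dots> = 1 / (2 * sqrt 2 * sqrt (real N))"
      using Np by (simp only: nonzero_divide_mult_cancel_left less_imp_neq not_sym)
    finally show ?thesis .
  qed
  moreover have "1 / (3 * sqrt (real N)) \<le> 1 / (2 * sqrt 2 * sqrt (real N))"
  proof -
    have "2 * sqrt 2 \<le> 3"
    proof -
      have "(2 * sqrt 2)\<^sup>2 \<le> 3\<^sup>2" by (simp add: power_mult_distrib)
      then show ?thesis by (rule power2_le_imp_le) simp
    qed
    then show ?thesis using N
      by (intro divide_left_mono mult_right_mono mult_pos_pos) auto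
  qed
  ultimately show ?thesis unfolding hurwitz_xi_def f_def by linarith
qed

definition BM :: "real \<Rightarrow> real \<Rightarrow> (real \<Rightarrow> real) \<Rightarrow> bool" where
  "BM a b \<phi> \<longleftrightarrow> \<phi> \<in> borel_measurable (lebesgue_on {a..b}) \<and> (\<exists>B. \<forall>s\<in>{a..b}. \<bar>\<phi> s\<bar> \<le> B)"

lemma BM_cont: "continuous_on {a..b} \<phi> \<Longrightarrow> BM a b \<phi>"
proof -
  assume c: "continuous_on {a..b} \<phi>"
  have "bounded (\<phi> ` {a..b})" by (rule compact_imp_bounded[OF compact_continuous_image[OF c compact_Icc]])
  then obtain B where "\<forall>x\<in>\<phi> ` {a..b}. norm x \<le> B" by (auto simp: bounded_iff)
  then have "\<forall>s\<in>{a..b}. \<bar>\<phi> s\<bar> \<le> B" by auto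
  moreover have "\<phi> \<in> borel_measurable (lebesgue_on {a..b})"
    by (rule continuous_imp_measurable_on_sets_lebesgue[OF c]) simp
  ultimately show ?thesis by (auto simp: BM_def)
qed

lemma BM_add: "BM a b f \<Longrightarrow> BM a b g \<Longrightarrow> BM a b (\<lambda>s. f s + g s)"
proof -
  assume f: "BM a b f" and g: "BM a b g"
  then obtain B1 B2 where "\<forall>s\<in>{a..b}. \<bar>f s\<bar> \<le> B1" "\<forall>s\<in>{a..b}. \<bar>g s\<bar> \<le> B2" by (auto simp: BM_def)
  then have "\<forall>s\<in>{a..b}. \<bar>f s + g s\<bar> \<le> B1 + B2" by (auto intro: order_trans[OF abs_triangle_ineq] add_mono)
  moreover have "(\<lambda>s. f s + g s) \<in> borel_measurable (lebesgue_on {a..b})"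
    using f g unfolding BM_def by (intro borel_measurable_add) auto
  ultimately show ?thesis by (auto simp: BM_def)
qed

lemma BM_mult: "BM a b f \<Longrightarrow> BM a b g \<Longrightarrow> BM a b (\<lambda>s. f s * g s)"
proof -
  assume f: "BM a b f" and g: "BM a b g"
  then obtain B1 B2 where b1: "\<forall>s\<in>{a..b}. \<bar>f s\<bar> \<le> B1" and b2: "\<forall>s\<in>{a..b}. \<bar>g s\<bar> \<le> B2" by (auto simp: BM_def)
  then have "\<forall>s\<in>{a..b}. \<bar>f s * g s\<bar> \<le> B1 * B2"
    by (simp add: abs_mult mult_mono')
  moreover have "(\<lambda>s. f s * g s) \<in> borel_measurable (lebesgue_on {a..b})"
    using f g unfolding BM_def by (intro borel_measurable_times) auto
  ultimately show ?thesis by (auto simp: BM_def)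
qed

lemma BM_const: "BM a b (\<lambda>s. c)"
  by (rule BM_cont) simp

lemma BM_cmult: "BM a b f \<Longrightarrow> BM a b (\<lambda>s. c * f s)"
  using BM_mult[OF BM_const] by blast

lemma BM_diff: "BM a b f \<Longrightarrow> BM a b g \<Longrightarrow> BM a b (\<lambda>s. f s - g s)"
  using BM_add[of a b f "\<lambda>s. (-1) * g s"] BM_cmult[of a b g "-1"] by simp

lemma BM_sum: "finite I \<Longrightarrow> (\<And>i. i \<in> I \<Longrightarrow> BM a b (f i)) \<Longrightarrow> BM a b (\<lambda>s. \<Sum>i\<in>I. f i s)"
  by (induction I rule: finite_induct) (auto intro: BM_add BM_const)

lemma BM_poly: "BM a b (poly r)"
  by (rule BM_cont) simp

lemma BM_step: "BM a b (\<lambda>s. if c \<le> s then 1 else 0)"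
proof -
  have "mono_on {a..b} (\<lambda>s::real. if c \<le> s then 1 else (0::real))"
    by (auto intro!: mono_onI)
  then have "(\<lambda>s::real. if c \<le> s then 1 else (0::real)) integrable_on {a..b}"
    by (rule integrable_on_mono_on)
  then have "(\<lambda>s::real. if c \<le> s then 1 else (0::real)) \<in> borel_measurable (lebesgue_on {a..b})"
    by (rule integrable_imp_measurable)
  moreover have "\<forall>s\<in>{a..b}. \<bar>(if c \<le> s then 1 else 0::real)\<bar> \<le> 1" by auto
  ultimately show ?thesis by (auto simp: BM_def)
qed

lemma BM_integrable: "BM a b \<phi> \<Longrightarrow> \<phi> integrable_on {a..b}"
proof -
  assume "BM a b \<phi>"
  then obtain B where m: "\<phi> \<in> borel_measurable (lebesgue_on {a..b})" and B: "\<forall>s\<in>{a..b}. \<bar>\<phi> s\<bar> \<le> B"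
    by (auto simp: BM_def)
  show ?thesis
    by (rule measurable_bounded_by_integrable_imp_integrable[where g="\<lambda>_. B", OF m]) (use B in auto)
qed

lemma best_approx:
  assumes D: "\<Delta> > 0" and f: "BM (t-\<Delta>) t f" and pr: "is_poly_proj \<Delta> t N f p" and dq: "degree q \<le> N"
  shows "integral {t-\<Delta>..t} (\<lambda>s. (f s - poly p s)\<^sup>2) \<le> integral {t-\<Delta>..t} (\<lambda>s. (f s - poly q s)\<^sup>2)"
proof -
  let ?I = "{t-\<Delta>..t}"
  define r where "r = p - q"
  have dr: "degree r \<le> N" using pr dq by (auto simp: r_def is_poly_proj_def intro: order_trans[OF degree_diff_le])
  have orth: "integral ?I (\<lambda>s. (f s - poly p s) * poly r s) = 0"
    using pr dr D by (auto simp: is_poly_proj_def mu_int_def)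
  have fp: "BM (t-\<Delta>) t (\<lambda>s. f s - poly p s)" by (intro BM_diff f BM_poly)
  have i1: "(\<lambda>s. (f s - poly p s)\<^sup>2) integrable_on ?I"
    using BM_integrable[OF BM_mult[OF fp fp]] by (simp add: power2_eq_square)
  have i2: "(\<lambda>s. 2 * ((f s - poly p s) * poly r s)) integrable_on ?I"
    by (intro BM_integrable BM_cmult BM_mult fp BM_poly)
  have i3: "(\<lambda>s. (poly r s)\<^sup>2) integrable_on ?I"
    by (rule integrable_continuous_real) (intro continuous_intros)
  have pw: "(f s - poly q s)\<^sup>2 = ((f s - poly p s)\<^sup>2 + 2 * ((f s - poly p s) * poly r s)) + (poly r s)\<^sup>2" for s
    by (simp add: r_def power2_eq_square algebra_simps)
  have "integral ?I (\<lambda>s. (f s - poly q s)\<^sup>2) = integral ?I (\<lambda>s. ((f s - poly p s)\<^sup>2 + 2 * ((f s - poly p s) * poly r s)) + (poly r s)\<^sup>2)"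
    by (simp only: pw)
  also have "\<dots> = integral ?I (\<lambda>s. (f s - poly p s)\<^sup>2 + 2 * ((f s - poly p s) * poly r s)) + integral ?I (\<lambda>s. (poly r s)\<^sup>2)"
    by (rule integral_add[OF integrable_add[OF i1 i2] i3])
  also have "integral ?I (\<lambda>s. (f s - poly p s)\<^sup>2 + 2 * ((f s - poly p s) * poly r s)) = integral ?I (\<lambda>s. (f s - poly p s)\<^sup>2) + integral ?I (\<lambda>s. 2 * ((f s - poly p s) * poly r s))"
    by (rule integral_add[OF i1 i2])
  also have "integral ?I (\<lambda>s. 2 * ((f s - poly p s) * poly r s)) = 0"
    using orth by simp
  finally have eq: "integral ?I (\<lambda>s. (f s - poly q s)\<^sup>2) = integral ?I (\<lambda>s. (f s - poly p s)\<^sup>2) + 0 + integral ?I (\<lambda>s. (poly r s)\<^sup>2)" .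
  have "0 \<le> integral ?I (\<lambda>s. (poly r s)\<^sup>2)" by (rule integral_nonneg[OF i3]) simp
  with eq show ?thesis by simp
qed

lemma lip_shift:
  assumes "lipschitz_on L S f" "\<And>s. s \<in> S \<Longrightarrow> g s = f s - (c::real)"
  shows "lipschitz_on L S (g :: real \<Rightarrow> real)"
  using assms by (auto simp: lipschitz_on_def dist_real_def)

lemma lip_single: "L \<ge> 0 \<Longrightarrow> lipschitz_on L {a..a::real} g"
  by (auto simp: lipschitz_on_def)

lemma piecewise_glue:
  fixes f :: "real \<Rightarrow> real" and tt xl :: "nat \<Rightarrow> real"
  assumes ab: "a < b"
    and tin: "\<forall>i\<in>{1..K}. a < tt i \<and> tt i < b"
    and tinc: "\<forall>i\<in>{1..<K}. tt i < tt (Suc i)"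
    and l0: "K = 0 \<longrightarrow> lipschitz_on L {a..b} f"
    and l1: "K \<ge> 1 \<longrightarrow> lipschitz_on L {a..<tt 1} f
                   \<and> (\<forall>i\<in>{1..<K}. lipschitz_on L {tt i..<tt (Suc i)} f)
                   \<and> lipschitz_on L {tt K..b} f"
    and lim: "\<forall>i\<in>{1..K}. (f \<longlongrightarrow> xl i) (at_left (tt i))"
    and L0: "L \<ge> 0"
  shows "lipschitz_on L {a..b} (\<lambda>s. f s - (\<Sum>i=1..K. (f (tt i) - xl i) * (if tt i \<le> s then 1 else 0)))"
proof -
  define d where "d i = f (tt i) - xl i" for i
  define g where "g s = f s - (\<Sum>i=1..K. d i * (if tt i \<le> s then 1 else 0))" for s
  define T where "T j = (if j = 0 then a else if j \<le> K then tt j else b)" for j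
  define D where "D j = (\<Sum>i=1..j. d i)" for j
  have smono: "tt i < tt j" if "1 \<le> i" "i < j" "j \<le> K" for i j
    using that
  proof (induction j)
    case 0 then show ?case by simp
  next
    case (Suc j)
    show ?case
    proof (cases "i = j")
      case True then show ?thesis using tinc Suc.prems by auto
    next
      case False
      then have "tt i < tt j" using Suc by auto
      also have "tt j < tt (Suc j)" using tinc Suc.prems False by auto
      finally show ?thesis .
    qed
  qed
  have smono': "tt i \<le> tt j" if "1 \<le> i" "i \<le> j" "j \<le> K" for i j
    using smono[of i j] that by (cases "i = j") auto
  have Tlt: "T j < T (Suc j)" if "j \<le> K" for j
  proof (cases "j = 0")
    case True then show ?thesis using that tin ab by (auto simp: T_def)
  next
    case False
    show ?thesis
    proof (cases "Suc j \<le> K")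
      case True then show ?thesis using False smono[of j "Suc j"] by (auto simp: T_def)
    next
      case False
      then have "j = K" using that by simp
      then show ?thesis using \<open>j \<noteq> 0\<close> tin by (auto simp: T_def)
    qed
  qed
  have Ta: "a \<le> T j" if "j \<le> K" for j
    using that tin by (auto simp: T_def less_imp_le)
  have sumeq: "(\<Sum>i=1..K. d i * (if tt i \<le> s then 1 else 0)) = D j"
    if j: "j \<le> K" and s1: "T j \<le> s" and s2: "j < K \<longrightarrow> s < T (Suc j)" for j s
  proof -
    have iff: "tt i \<le> s \<longleftrightarrow> i \<le> j" if i: "i \<in> {1..K}" for i
    proof
      assume "i \<le> j"
      then have "tt i \<le> tt j" using i j by (intro smono') auto
      moreover have "T j = tt j" using \<open>i \<le> j\<close> i j by (auto simp: T_def)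
      ultimately show "tt i \<le> s" using s1 by simp
    next
      assume "tt i \<le> s"
      show "i \<le> j"
      proof (rule ccontr)
        assume "\<not> i \<le> j"
        then have "Suc j \<le> i" "j < K" using i by auto
        then have "tt (Suc j) \<le> tt i" using i by (intro smono') auto
        moreover have "T (Suc j) = tt (Suc j)" using \<open>j < K\<close> by (auto simp: T_def)
        ultimately show False using s2 \<open>j < K\<close> \<open>tt i \<le> s\<close> by simp
      qed
    qed
    have "(\<Sum>i=1..K. d i * (if tt i \<le> s then 1 else 0)) = (\<Sum>i\<in>{1..K}. if i \<in> {..j} then d i else 0)"
      by (intro sum.cong refl) (simp add: iff)
    also have "\<dots> = sum d ({1..K} \<inter> {..j})" by (rule sum.inter_restrict[symmetric]) simp
    also have "{1..K} \<inter> {..j} = {1..j}" using j by auto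
    finally show ?thesis by (simp add: D_def)
  qed
  have piece: "lipschitz_on L {T j..<T (Suc j)} f" if "j < K" for j
  proof (cases "j = 0")
    case True
    then show ?thesis using l1 that by (simp add: T_def)
  next
    case False
    then show ?thesis using l1 that by (auto simp: T_def)
  qed
  have gpiece: "lipschitz_on L {T j..<T (Suc j)} g" if "j < K" for j
  proof (rule lip_shift[OF piece[OF that]])
    fix s assume "s \<in> {T j..<T (Suc j)}"
    then show "g s = f s - D j" unfolding g_def using that by (subst sumeq[of j s]) auto
  qed
  have glast: "lipschitz_on L {T K..b} g"
  proof (rule lip_shift)
    show "lipschitz_on L {T K..b} f"
      using l0 l1 by (cases "K = 0") (auto simp: T_def)
    fix s assume "s \<in> {T K..b}"
    then show "g s = f s - D K" unfolding g_def by (subst sumeq[of K s]) auto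
  qed
  have ind: "lipschitz_on L {a..T j} g" if "j \<le> K" for j
    using that
  proof (induction j)
    case 0 then show ?case using L0 by (simp add: T_def lip_single)
  next
    case (Suc j)
    have jK: "j < K" using Suc.prems by simp
    have T1: "T (Suc j) = tt (Suc j)" using Suc.prems by (simp add: T_def)
    have closed: "lipschitz_on L {T j..T (Suc j)} g"
    proof (rule lip_close[OF gpiece[OF jK] Tlt])
      show "j \<le> K" using jK by simp
      have ev: "eventually (\<lambda>s. s \<in> {T j<..<T (Suc j)}) (at_left (T (Suc j)))"
        by (rule eventually_at_left_real) (rule Tlt, use jK in simp)
      have "((\<lambda>s. f s - D j) \<longlongrightarrow> xl (Suc j) - D j) (at_left (T (Suc j)))"
        using lim Suc.prems by (auto simp: T1 intro!: tendsto_intros)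
      then have "(g \<longlongrightarrow> xl (Suc j) - D j) (at_left (T (Suc j)))"
      proof (rule Lim_transform_eventually)
        show "eventually (\<lambda>s. f s - D j = g s) (at_left (T (Suc j)))"
          using ev by eventually_elim (unfold g_def, subst sumeq[of j], use jK in auto)
      qed
      moreover have "g (T (Suc j)) = xl (Suc j) - D j"
      proof -
        have "g (T (Suc j)) = f (T (Suc j)) - D (Suc j)"
          unfolding g_def using Suc.prems Tlt[of "Suc j"] by (subst sumeq[of "Suc j"]) auto
        also have "\<dots> = xl (Suc j) - D j" by (simp add: D_def T1 d_def)
        finally show ?thesis .
      qed
      ultimately show "(g \<longlongrightarrow> g (T (Suc j))) (at_left (T (Suc j)))" by simp
    qed
    have "lipschitz_on L {a..T (Suc j)} (\<lambda>x. if x \<le> T j then g x else g x)"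
      by (rule lipschitz_on_concat[OF Suc.IH closed]) (use jK in auto)
    then show ?case by simp
  qed
  have "lipschitz_on L {a..b} (\<lambda>x. if x \<le> T K then g x else g x)"
    by (rule lipschitz_on_concat[OF ind glast]) auto
  then show ?thesis by (simp add: g_def d_def)
qed

lemma final_arith:
  fixes \<Delta> L S I \<xi> :: real and N K :: nat
  assumes D: "\<Delta> > 0" and L0: "L \<ge> 0" and S0: "S \<ge> 0" and N1: "N \<ge> 1"
    and xi: "\<xi> \<ge> 1 / (3 * sqrt (real N))"
    and I: "I \<le> 2 * (L + S / (\<Delta> / sqrt (real N)))\<^sup>2 * \<Delta>^3 / (6 * lam (Suc N)) + 2 * S\<^sup>2 * (\<Delta> / sqrt (real N))"
  shows "I / \<Delta> \<le> 2 * (\<Delta>\<^sup>2 * L\<^sup>2 * (real K + 1)\<^sup>2) / (real N * (2 * real N - 1))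
               + 1 * \<Delta> * L * (real K + 1) * S * \<xi> + 8 * S\<^sup>2 * \<xi>"
proof -
  define s where "s = sqrt (real N)"
  define lm where "lm = lam (Suc N)"
  have Np: "real N \<ge> 1" using N1 by simp
  have s0: "s > 0" using N1 by (simp add: s_def)
  have ss: "s * s = real N" by (simp add: s_def)
  have s1: "s \<ge> 1" using Np by (simp add: s_def)
  have sN: "s \<le> real N"
  proof -
    have "s * 1 \<le> s * s" using s1 s0 by (intro mult_left_mono) auto
    then show ?thesis using ss by simp
  qed
  have lmv: "lm = (real N + 1) * (real N + 2)" by (simp add: lm_def lam_def add.commute)
  have lm0: "lm > 0" using Np by (simp add: lmv)
  have "0 \<le> 1 / (3 * sqrt (real N))" by simp
  then have xi0: "\<xi> \<ge> 0" using xi by linarith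
  have e1: "L + S / (\<Delta> / s) = (L * \<Delta> + S * s) / \<Delta>" using D s0 by (simp add: field_simps)
  have "I \<le> 2 * ((L * \<Delta> + S * s) / \<Delta>)\<^sup>2 * \<Delta>^3 / (6 * lm) + 2 * S\<^sup>2 * (\<Delta> / s)"
  proof -
    have "I \<le> 2 * (L + S / (\<Delta> / s))\<^sup>2 * \<Delta>^3 / (6 * lm) + 2 * S\<^sup>2 * (\<Delta> / s)"
      using I by (simp only: s_def lm_def)
    then show ?thesis by (simp only: e1)
  qed
  also have "2 * ((L * \<Delta> + S * s) / \<Delta>)\<^sup>2 * \<Delta>^3 / (6 * lm) = \<Delta> * ((L * \<Delta> + S * s)\<^sup>2 / (3 * lm))"
    using D lm0 by (simp add: power2_eq_square power3_eq_cube field_simps)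
  also have "2 * S\<^sup>2 * (\<Delta> / s) = \<Delta> * (2 * S\<^sup>2 / s)" by simp
  finally have I2: "I / \<Delta> \<le> (L * \<Delta> + S * s)\<^sup>2 / (3 * lm) + 2 * S\<^sup>2 / s"
    using D by (simp add: divide_le_eq algebra_simps)
  have sq: "(L * \<Delta> + S * s)\<^sup>2 \<le> 2 * (\<Delta>\<^sup>2 * L\<^sup>2) + 2 * (S\<^sup>2 * real N)"
  proof -
    have "0 \<le> (L * \<Delta> - S * s)\<^sup>2" by simp
    then show ?thesis using ss by (simp add: power2_eq_square algebra_simps)
  qed
  have A: "2 * (\<Delta>\<^sup>2 * L\<^sup>2) / (3 * lm) \<le> 2 * (\<Delta>\<^sup>2 * L\<^sup>2 * (real K + 1)\<^sup>2) / (real N * (2 * real N - 1))"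
  proof -
    have pos: "real N * (2 * real N - 1) > 0" using Np by simp
    have le: "real N * (2 * real N - 1) \<le> 3 * lm" using Np by (simp add: lmv algebra_simps)
    have K1: "1 \<le> (real K + 1)\<^sup>2" by simp
    have "2 * (\<Delta>\<^sup>2 * L\<^sup>2) / (3 * lm) \<le> 2 * (\<Delta>\<^sup>2 * L\<^sup>2) / (real N * (2 * real N - 1))"
      using pos le by (intro divide_left_mono) auto
    also have "\<dots> \<le> 2 * (\<Delta>\<^sup>2 * L\<^sup>2 * (real K + 1)\<^sup>2) / (real N * (2 * real N - 1))"
    proof (rule divide_right_mono)
      have "\<Delta>\<^sup>2 * L\<^sup>2 * 1 \<le> \<Delta>\<^sup>2 * L\<^sup>2 * (real K + 1)\<^sup>2" using K1 by (intro mult_left_mono) auto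
      then show "2 * (\<Delta>\<^sup>2 * L\<^sup>2) \<le> 2 * (\<Delta>\<^sup>2 * L\<^sup>2 * (real K + 1)\<^sup>2)" by simp
    qed (use pos in simp)
    finally show ?thesis .
  qed
  have B: "2 * (S\<^sup>2 * real N) / (3 * lm) \<le> 2/3 * (S\<^sup>2 / s)"
  proof -
    have "real N * s \<le> lm" 
    proof -
      have "real N * s \<le> real N * real N" using sN Np by (intro mult_left_mono) auto
      also have "\<dots> \<le> lm" by (simp add: lmv algebra_simps)
      finally show ?thesis .
    qed
    then have "real N / lm \<le> 1 / s" using lm0 s0 by (simp add: field_simps)
    then have "S\<^sup>2 * (real N / lm) \<le> S\<^sup>2 * (1 / s)" by (intro mult_left_mono) auto
    moreover have "2 * (S\<^sup>2 * real N) / (3 * lm) = 2/3 * (S\<^sup>2 * (real N / lm))" by simp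
    moreover have "2/3 * (S\<^sup>2 / s) = 2/3 * (S\<^sup>2 * (1 / s))" by simp
    ultimately show ?thesis by linarith
  qed
  have C: "8/3 * (S\<^sup>2 / s) \<le> 8 * S\<^sup>2 * \<xi>"
  proof -
    have "1 / (3 * s) \<le> \<xi>" using xi by (simp add: s_def)
    then have "S\<^sup>2 * (1 / (3 * s)) \<le> S\<^sup>2 * \<xi>" by (intro mult_left_mono) auto
    moreover have "8/3 * (S\<^sup>2 / s) = 8 * (S\<^sup>2 * (1 / (3 * s)))" by simp
    ultimately show ?thesis by linarith
  qed
  have M: "0 \<le> 1 * \<Delta> * L * (real K + 1) * S * \<xi>" using D L0 S0 xi0 by simp
  have "(L * \<Delta> + S * s)\<^sup>2 / (3 * lm) \<le> (2 * (\<Delta>\<^sup>2 * L\<^sup>2) + 2 * (S\<^sup>2 * real N)) / (3 * lm)"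
    using sq lm0 by (intro divide_right_mono) auto
  also have "\<dots> = 2 * (\<Delta>\<^sup>2 * L\<^sup>2) / (3 * lm) + 2 * (S\<^sup>2 * real N) / (3 * lm)" by (simp add: add_divide_distrib)
  finally have "I / \<Delta> \<le> 2 * (\<Delta>\<^sup>2 * L\<^sup>2) / (3 * lm) + 2 * (S\<^sup>2 * real N) / (3 * lm) + 2 * S\<^sup>2 / s"
    using I2 by linarith
  moreover have "2 * S\<^sup>2 / s = 2 * (S\<^sup>2 / s)" by simp
  ultimately show ?thesis using A B C M by linarith
qed

lemma clamp_lip: "\<bar>max 0 (min 1 u) - max 0 (min 1 v)\<bar> \<le> \<bar>u - v\<bar>" for u v :: real
  by (auto simp: max_def min_def abs_le_iff)

lemma step_ramp:
  fixes \<delta> c s :: real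
  assumes d: "\<delta> > 0"
  shows "\<bar>(if c \<le> s then 1 else 0) - max 0 (min 1 ((s - c + \<delta>) / \<delta>))\<bar> \<le> (if s \<in> {c - \<delta>..c} then 1 else 0)"
proof (cases "c \<le> s")
  case True
  then have "1 \<le> (s - c + \<delta>) / \<delta>" using d by (simp add: le_divide_eq)
  then show ?thesis using True by simp
next
  case False
  show ?thesis
  proof (cases "s < c - \<delta>")
    case True
    then have "(s - c + \<delta>) / \<delta> < 0" using d by (simp add: divide_less_0_iff)
    then show ?thesis using True False by simp
  next
    case False2: False
    then show ?thesis using False by (auto simp: max_def min_def)
  qed
qed

lemma step_ramp1:
  fixes \<delta> c s :: real
  assumes d: "\<delta> > 0"
  shows "\<bar>(if c \<le> s then 1 else 0) - max 0 (min 1 ((s - c + \<delta>) / \<delta>))\<bar> \<le> 1"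
  using step_ramp[OF d, of c s] by (auto split: if_splits)

lemma ind_integral:
  fixes a b c c' :: real
  assumes "c \<le> c'"
  shows "(\<lambda>s. if s \<in> {c..c'} then 1 else 0::real) integrable_on {a..b}"
    and "integral {a..b} (\<lambda>s. if s \<in> {c..c'} then 1 else 0::real) \<le> c' - c"
proof -
  have eq: "{c..c'} \<inter> {a..b} = {max c a..min c' b}" by auto
  show "(\<lambda>s. if s \<in> {c..c'} then 1 else 0::real) integrable_on {a..b}"
    unfolding integrable_restrict_Int eq by (rule integrable_const_ivl)
  have "integral {a..b} (\<lambda>s. if s \<in> {c..c'} then 1 else 0::real) = integral {max c a..min c' b} (\<lambda>s. 1::real)"
    by (simp only: integral_restrict_Int eq)
  also have "\<dots> \<le> c' - c"
  proof (cases "max c a \<le> min c' b")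
    case True then show ?thesis by (simp add: content_real)
  next
    case False
    then have "{max c a..min c' b} = {}" by auto
    then show ?thesis using assms by simp
  qed
  finally show "integral {a..b} (\<lambda>s. if s \<in> {c..c'} then 1 else 0::real) \<le> c' - c" .
qed

lemma core:
  fixes f :: "real \<Rightarrow> real" and tt xl :: "nat \<Rightarrow> real"
  assumes D: "\<Delta> > 0" and L0: "L \<ge> 0" and N1: "N \<ge> 1"
    and tin: "\<forall>i\<in>{1..K}. t - \<Delta> < tt i \<and> tt i < t"
    and tinc: "\<forall>i\<in>{1..<K}. tt i < tt (Suc i)"
    and l0: "K = 0 \<longrightarrow> lipschitz_on L {t - \<Delta>..t} f"
    and l1: "K \<ge> 1 \<longrightarrow> lipschitz_on L {t - \<Delta>..<tt 1} f
                   \<and> (\<forall>i\<in>{1..<K}. lipschitz_on L {tt i..<tt (Suc i)} f)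
                   \<and> lipschitz_on L {tt K..t} f"
    and lim: "\<forall>i\<in>{1..K}. (f \<longlongrightarrow> xl i) (at_left (tt i))"
    and pr: "is_poly_proj \<Delta> t N f p"
    and Sdef: "S = (\<Sum>i=1..K. \<bar>xl i - f (tt i)\<bar>)"
  shows "integral {t-\<Delta>..t} (\<lambda>s. (f s - poly p s)\<^sup>2)
           \<le> 2 * (L + S / (\<Delta> / sqrt (real N)))\<^sup>2 * \<Delta>^3 / (6 * lam (Suc N)) + 2 * S\<^sup>2 * (\<Delta> / sqrt (real N))"
proof -
  define a where "a = t - \<Delta>"
  define b where "b = t"
  have ab: "a < b" using D by (simp add: a_def b_def)
  have ba: "b - a = \<Delta>" by (simp add: a_def b_def)
  define \<delta> where "\<delta> = \<Delta> / sqrt (real N)"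
  have d0: "\<delta> > 0" using D N1 by (simp add: \<delta>_def)
  define d where "d i = f (tt i) - xl i" for i
  have S': "S = (\<Sum>i=1..K. \<bar>d i\<bar>)" unfolding Sdef d_def by (simp add: abs_minus_commute)
  have S0: "S \<ge> 0" by (simp add: S')
  define h where "h i s = (if tt i \<le> s then 1 else 0::real)" for i s
  define g where "g s = f s - (\<Sum>i=1..K. d i * h i s)" for s
  have lipg: "lipschitz_on L {a..b} g"
    using piecewise_glue[OF ab _ tinc _ _ lim L0] tin l0 l1
    unfolding g_def d_def h_def a_def b_def by blast
  define r where "r i s = max 0 (min 1 ((s - tt i + \<delta>) / \<delta>))" for i s
  have rlip: "\<bar>r i x - r i y\<bar> \<le> \<bar>x - y\<bar> / \<delta>" for i x y
  proof -
    have "\<bar>r i x - r i y\<bar> \<le> \<bar>(x - tt i + \<delta>) / \<delta> - (y - tt i + \<delta>) / \<delta>\<bar>"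
      unfolding r_def by (rule clamp_lip)
    also have "(x - tt i + \<delta>) / \<delta> - (y - tt i + \<delta>) / \<delta> = (x - y) / \<delta>"
      by (simp add: diff_divide_distrib[symmetric])
    finally show ?thesis using d0 by (simp add: abs_divide)
  qed
  define G where "G s = g s + (\<Sum>i=1..K. d i * r i s)" for s
  have lipG: "lipschitz_on (L + S / \<delta>) {a..b} G"
  proof (rule lipschitz_onI)
    show "0 \<le> L + S / \<delta>" using L0 S0 d0 by simp
    fix x y assume x: "x \<in> {a..b}" and y: "y \<in> {a..b}"
    have ss: "(\<Sum>i=1..K. d i * (r i x - r i y)) = (\<Sum>i=1..K. d i * r i x) - (\<Sum>i=1..K. d i * r i y)"
      by (simp add: right_diff_distrib sum_subtractf)
    have "dist (G x) (G y) = \<bar>(g x - g y) + (\<Sum>i=1..K. d i * (r i x - r i y))\<bar>"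
      unfolding ss by (simp add: dist_real_def G_def)
    also have "\<dots> \<le> \<bar>g x - g y\<bar> + \<bar>\<Sum>i=1..K. d i * (r i x - r i y)\<bar>" by (rule abs_triangle_ineq)
    also have "\<bar>g x - g y\<bar> \<le> L * \<bar>x - y\<bar>"
      using lipschitz_onD[OF lipg x y] by (simp add: dist_real_def)
    also have "\<bar>\<Sum>i=1..K. d i * (r i x - r i y)\<bar> \<le> (\<Sum>i=1..K. \<bar>d i\<bar> * (\<bar>x - y\<bar> / \<delta>))"
    proof -
      have "\<bar>\<Sum>i=1..K. d i * (r i x - r i y)\<bar> \<le> (\<Sum>i=1..K. \<bar>d i * (r i x - r i y)\<bar>)" by (rule sum_abs)
      also have "\<dots> \<le> (\<Sum>i=1..K. \<bar>d i\<bar> * (\<bar>x - y\<bar> / \<delta>))"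
      proof (rule sum_mono)
        fix i
        have "\<bar>d i\<bar> * \<bar>r i x - r i y\<bar> \<le> \<bar>d i\<bar> * (\<bar>x - y\<bar> / \<delta>)"
          by (intro mult_left_mono rlip) simp
        then show "\<bar>d i * (r i x - r i y)\<bar> \<le> \<bar>d i\<bar> * (\<bar>x - y\<bar> / \<delta>)" by (simp add: abs_mult)
      qed
      finally show ?thesis .
    qed
    also have "(\<Sum>i=1..K. \<bar>d i\<bar> * (\<bar>x - y\<bar> / \<delta>)) = S / \<delta> * \<bar>x - y\<bar>"
      unfolding S' sum_distrib_right[symmetric] by simp
    finally show "dist (G x) (G y) \<le> (L + S / \<delta>) * dist x y"
      by (simp add: dist_real_def algebra_simps)
  qed
  obtain q where dq: "degree q \<le> N"
    and JB: "integral {a..b} (\<lambda>x. (G x - poly q x)\<^sup>2) \<le> (L + S / \<delta>)\<^sup>2 * (b-a)^3 / (6 * lam (Suc N))"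
    using jackson_ab[OF ab lipG, of N] by blast
  define e where "e i s = h i s - r i s" for i s
  define E where "E s = (\<Sum>i=1..K. d i * e i s)" for s
  have fGE: "f s = G s + E s" for s
  proof -
    have "E s = (\<Sum>i=1..K. d i * h i s) - (\<Sum>i=1..K. d i * r i s)"
      by (simp add: E_def e_def right_diff_distrib sum_subtractf)
    then show ?thesis by (simp add: G_def g_def)
  qed
  have ffun: "f = (\<lambda>s. G s + E s)" using fGE by (rule ext)
  have rcont: "continuous_on {a..b} (r i)" for i
    unfolding r_def by (intro continuous_intros) (use d0 in auto)
  have BMG: "BM a b G"
    by (rule BM_cont[OF lipschitz_on_continuous_on[OF lipG]])
  have BME: "BM a b E"
    unfolding E_def e_def h_def
    by (intro BM_sum BM_cmult BM_diff BM_step BM_cont rcont) simp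
  have BMf: "BM (t-\<Delta>) t f"
    using BM_add[OF BMG BME] by (simp add: ffun a_def b_def)
  have best: "integral {a..b} (\<lambda>s. (f s - poly p s)\<^sup>2) \<le> integral {a..b} (\<lambda>s. (f s - poly q s)\<^sup>2)"
    using best_approx[OF D BMf pr dq] by (simp add: a_def b_def)
  define ch where "ch i s = (if s \<in> {tt i - \<delta>..tt i} then 1 else 0::real)" for i s
  have echi: "\<bar>e i s\<bar> \<le> ch i s" for i s
    unfolding e_def h_def r_def ch_def by (rule step_ramp[OF d0])
  have chi1: "ch i s \<le> 1" for i s by (simp add: ch_def)
  have chi0: "ch i s \<ge> 0" for i s by (simp add: ch_def)
  have pw: "(f s - poly q s)\<^sup>2 \<le> 2 * (G s - poly q s)\<^sup>2 + 2 * S * (\<Sum>i=1..K. \<bar>d i\<bar> * ch i s)" for s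
  proof -
    define W where "W = (\<Sum>i=1..K. \<bar>d i\<bar> * ch i s)"
    have W0: "W \<ge> 0" unfolding W_def by (intro sum_nonneg) (simp add: chi0)
    have WS: "W \<le> S" unfolding W_def S'
      by (intro sum_mono) (simp add: chi1 mult_left_le)
    have EW: "\<bar>E s\<bar> \<le> W"
    proof -
      have "\<bar>E s\<bar> \<le> (\<Sum>i=1..K. \<bar>d i * e i s\<bar>)" unfolding E_def by (rule sum_abs)
      also have "\<dots> \<le> W" unfolding W_def
        by (intro sum_mono) (simp add: abs_mult mult_left_mono echi)
      finally show ?thesis .
    qed
    have "(E s)\<^sup>2 \<le> W\<^sup>2" using EW by (metis abs_ge_zero abs_le_square_iff power2_abs order_trans abs_of_nonneg W0)
    also have "W\<^sup>2 \<le> S * W" using WS W0 by (simp add: power2_eq_square mult_right_mono)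
    finally have E2: "(E s)\<^sup>2 \<le> S * W" .
    have "(f s - poly q s)\<^sup>2 = ((G s - poly q s) + E s)\<^sup>2" by (simp add: fGE algebra_simps)
    also have "\<dots> \<le> 2 * (G s - poly q s)\<^sup>2 + 2 * (E s)\<^sup>2"
    proof -
      have "0 \<le> ((G s - poly q s) - E s)\<^sup>2" by simp
      then show ?thesis by (simp add: power2_eq_square algebra_simps)
    qed
    finally show ?thesis using E2 unfolding W_def by linarith
  qed
  have chi_int: "(ch i) integrable_on {a..b}" for i
    unfolding ch_def using ind_integral(1)[of "tt i - \<delta>" "tt i" a b] d0 by simp
  have chi_le: "integral {a..b} (ch i) \<le> \<delta>" for i
    unfolding ch_def using ind_integral(2)[of "tt i - \<delta>" "tt i" a b] d0 by simp
  have Gq_int: "(\<lambda>s. (G s - poly q s)\<^sup>2) integrable_on {a..b}"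
    by (rule integrable_continuous_real)
       (intro continuous_intros lipschitz_on_continuous_on[OF lipG])
  have sum_int: "(\<lambda>s. \<Sum>i=1..K. \<bar>d i\<bar> * ch i s) integrable_on {a..b}"
    by (intro integrable_sum) (auto intro: integrable_cmult_real chi_int)
  have fq_int: "(\<lambda>s. (f s - poly q s)\<^sup>2) integrable_on {a..b}"
  proof -
    have "BM a b (\<lambda>s. f s - poly q s)" using BMf by (intro BM_diff BM_poly) (simp add: a_def b_def)
    then have "BM a b (\<lambda>s. (f s - poly q s) * (f s - poly q s))" by (intro BM_mult)
    then show ?thesis by (simp add: BM_integrable power2_eq_square)
  qed
  have "integral {a..b} (\<lambda>s. (f s - poly q s)\<^sup>2)
      \<le> integral {a..b} (\<lambda>s. 2 * (G s - poly q s)\<^sup>2 + 2 * S * (\<Sum>i=1..K. \<bar>d i\<bar> * ch i s))"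
  proof (rule integral_le[OF fq_int])
    show "(\<lambda>s. 2 * (G s - poly q s)\<^sup>2 + 2 * S * (\<Sum>i=1..K. \<bar>d i\<bar> * ch i s)) integrable_on {a..b}"
      by (intro integrable_add integrable_cmult_real Gq_int sum_int)
    fix s assume "s \<in> {a..b}"
    show "(f s - poly q s)\<^sup>2 \<le> 2 * (G s - poly q s)\<^sup>2 + 2 * S * (\<Sum>i=1..K. \<bar>d i\<bar> * ch i s)"
      by (rule pw)
  qed
  also have "\<dots> = 2 * integral {a..b} (\<lambda>s. (G s - poly q s)\<^sup>2) + 2 * S * (\<Sum>i=1..K. \<bar>d i\<bar> * integral {a..b} (ch i))"
  proof -
    have "integral {a..b} (\<lambda>s. 2 * (G s - poly q s)\<^sup>2 + 2 * S * (\<Sum>i=1..K. \<bar>d i\<bar> * ch i s))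
        = integral {a..b} (\<lambda>s. 2 * (G s - poly q s)\<^sup>2) + integral {a..b} (\<lambda>s. 2 * S * (\<Sum>i=1..K. \<bar>d i\<bar> * ch i s))"
      by (rule integral_add[OF integrable_cmult_real[OF Gq_int] integrable_cmult_real[OF sum_int]])
    also have "integral {a..b} (\<lambda>s. 2 * S * (\<Sum>i=1..K. \<bar>d i\<bar> * ch i s)) = 2 * S * integral {a..b} (\<lambda>s. \<Sum>i=1..K. \<bar>d i\<bar> * ch i s)"
      by simp
    also have "integral {a..b} (\<lambda>s. \<Sum>i=1..K. \<bar>d i\<bar> * ch i s) = (\<Sum>i=1..K. integral {a..b} (\<lambda>s. \<bar>d i\<bar> * ch i s))"
      by (rule integral_sum) (auto intro: integrable_cmult_real chi_int)
    also have "\<dots> = (\<Sum>i=1..K. \<bar>d i\<bar> * integral {a..b} (ch i))" by simp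
    finally show ?thesis by simp
  qed
  also have "\<dots> \<le> 2 * ((L + S / \<delta>)\<^sup>2 * (b-a)^3 / (6 * lam (Suc N))) + 2 * S * (\<Sum>i=1..K. \<bar>d i\<bar> * \<delta>)"
  proof -
    have "(\<Sum>i=1..K. \<bar>d i\<bar> * integral {a..b} (ch i)) \<le> (\<Sum>i=1..K. \<bar>d i\<bar> * \<delta>)"
      by (intro sum_mono mult_left_mono chi_le) simp
    then have "2 * S * (\<Sum>i=1..K. \<bar>d i\<bar> * integral {a..b} (ch i)) \<le> 2 * S * (\<Sum>i=1..K. \<bar>d i\<bar> * \<delta>)"
      using S0 by (intro mult_left_mono) auto
    then show ?thesis using JB by linarith
  qed
  also have "\<dots> = 2 * (L + S / \<delta>)\<^sup>2 * \<Delta>^3 / (6 * lam (Suc N)) + 2 * S\<^sup>2 * \<delta>"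
    by (simp add: ba S' sum_distrib_right[symmetric] power2_eq_square)
  finally show ?thesis using best by (simp add: a_def b_def \<delta>_def)
qed

theorem theorem1:
  shows "\<exists>C0 C1 C2 :: real. C0 > 0 \<and> C1 > 0 \<and> C2 > 0 \<and>
    (\<forall>(\<Delta>::real) (t::real) (L::real) (N::nat) (K::nat)
       (tt::nat \<Rightarrow> real) (x::nat \<Rightarrow> real) (xl::nat \<Rightarrow> real)
       (xhat::real \<Rightarrow> real) (p::real poly).
      \<Delta> > 0 \<and> L \<ge> 0 \<and> N \<ge> 1
      \<and> (\<forall>i\<in>{1..K}. t - \<Delta> < tt i \<and> tt i < t)
      \<and> (\<forall>i\<in>{1..<K}. tt i < tt (Suc i))
      \<and> (K = 0 \<longrightarrow> lipschitz_on L {t - \<Delta>..t} xhat)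
      \<and> (K \<ge> 1 \<longrightarrow> lipschitz_on L {t - \<Delta>..<tt 1} xhat
                   \<and> (\<forall>i\<in>{1..<K}. lipschitz_on L {tt i..<tt (Suc i)} xhat)
                   \<and> lipschitz_on L {tt K..t} xhat)
      \<and> (\<forall>i\<in>{1..K}. xhat (tt i) = x i)
      \<and> (\<forall>i\<in>{1..K}. (xhat \<longlongrightarrow> xl i) (at_left (tt i)))
      \<and> is_poly_proj \<Delta> t N xhat p
      \<longrightarrow> (let S = (\<Sum>i=1..K. \<bar>xl i - x i\<bar>) in
           mu_norm2 \<Delta> t (\<lambda>s. xhat s - poly p s)
             \<le> C0 * (\<Delta>\<^sup>2 * L\<^sup>2 * (real K + 1)\<^sup>2) / (real N * (2 * real N - 1))
               + C1 * \<Delta> * L * (real K + 1) * S * hurwitz_xi (3/2) (real N)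
               + C2 * S\<^sup>2 * hurwitz_xi (3/2) (real N)))"
proof (rule exI[of _ 2], rule exI[of _ 1], rule exI[of _ 8], (rule conjI, simp)+, intro allI impI)
  fix \<Delta> t L :: real and N K :: nat and tt x xl :: "nat \<Rightarrow> real" and xhat :: "real \<Rightarrow> real" and p :: "real poly"
  assume H: "\<Delta> > 0 \<and> L \<ge> 0 \<and> N \<ge> 1
      \<and> (\<forall>i\<in>{1..K}. t - \<Delta> < tt i \<and> tt i < t)
      \<and> (\<forall>i\<in>{1..<K}. tt i < tt (Suc i))
      \<and> (K = 0 \<longrightarrow> lipschitz_on L {t - \<Delta>..t} xhat)
      \<and> (K \<ge> 1 \<longrightarrow> lipschitz_on L {t - \<Delta>..<tt 1} xhat
                   \<and> (\<forall>i\<in>{1..<K}. lipschitz_on L {tt i..<tt (Suc i)} xhat)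
                   \<and> lipschitz_on L {tt K..t} xhat)
      \<and> (\<forall>i\<in>{1..K}. xhat (tt i) = x i)
      \<and> (\<forall>i\<in>{1..K}. (xhat \<longlongrightarrow> xl i) (at_left (tt i)))
      \<and> is_poly_proj \<Delta> t N xhat p"
  from H have D: "\<Delta> > 0" and L0: "L \<ge> 0" and N1: "N \<ge> 1" by auto
  define S where "S = (\<Sum>i=1..K. \<bar>xl i - x i\<bar>)"
  have Sf: "S = (\<Sum>i=1..K. \<bar>xl i - xhat (tt i)\<bar>)"
    unfolding S_def using H by (intro sum.cong refl) auto
  have S0: "S \<ge> 0" by (simp add: S_def)
  have I: "integral {t-\<Delta>..t} (\<lambda>s. (xhat s - poly p s)\<^sup>2)
           \<le> 2 * (L + S / (\<Delta> / sqrt (real N)))\<^sup>2 * \<Delta>^3 / (6 * lam (Suc N)) + 2 * S\<^sup>2 * (\<Delta> / sqrt (real N))"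
    by (rule core[where f=xhat and xl=xl and tt=tt and p=p and K=K and S=S and t=t and \<Delta>=\<Delta> and L=L and N=N])
       (use H Sf in auto)
  have xi: "hurwitz_xi (3/2) (real N) \<ge> 1 / (3 * sqrt (real N))" by (rule xi_lower[OF N1])
  have "integral {t-\<Delta>..t} (\<lambda>s. (xhat s - poly p s)\<^sup>2) / \<Delta>
        \<le> 2 * (\<Delta>\<^sup>2 * L\<^sup>2 * (real K + 1)\<^sup>2) / (real N * (2 * real N - 1))
               + 1 * \<Delta> * L * (real K + 1) * S * hurwitz_xi (3/2) (real N) + 8 * S\<^sup>2 * hurwitz_xi (3/2) (real N)"
    by (rule final_arith[OF D L0 S0 N1 xi I])
  then show "let S = (\<Sum>i=1..K. \<bar>xl i - x i\<bar>) in
           mu_norm2 \<Delta> t (\<lambda>s. xhat s - poly p s)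
             \<le> 2 * (\<Delta>\<^sup>2 * L\<^sup>2 * (real K + 1)\<^sup>2) / (real N * (2 * real N - 1))
               + 1 * \<Delta> * L * (real K + 1) * S * hurwitz_xi (3/2) (real N)
               + 8 * S\<^sup>2 * hurwitz_xi (3/2) (real N)"
    by (simp add: Let_def S_def mu_norm2_def mu_int_def)
qed

end
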